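(* Let $t,\ell,m$ be integers with $1 \le t < \ell \le m$. Then $\hat{w}_1(t;\ell,m)<\hat{w}_r(t;\ell,m)$ for every $2\le r\le \ell$. Moreover, the code $\widehat{C}_{\det}(t;\ell,m)$ has exactly $\mu_1(\ell,m)$ codewords of minimum weight, these codewords generate the code, and every codeword of $\widehat{C}_{\det}(t;\ell,m)$ is a sum of at most $\ell$ codewords of minimum weight.
   Context: $q$ is a prime power; $\mu_t(a,b)$ is the number of $a\times b$ matrices over $\mathbb{F}_q$ of rank exactly $t$. For an $\ell\times m$ matrix $M=(m_{ij})$, $\tau_r(M)=m_{11}+\cdots+m_{rr}$. $\hat{w}_r(t;\ell,m)$ is $\frac{1}{q-1}$ times the number of $\ell\times m$ matrices $M$ over $\mathbb{F}_q$ with $1\le\mathrm{rk}(M)\le t$ and $\tau_r(M)\ne 0$. Let $\widehat{\mathcal D}_t(\ell,m)\subset\mathbb{P}^{\ell m-1}(\mathbb{F}_q)=\mathbb{P}(\mathrm{Mat}_{\ell\times m}(\mathbb{F}_q))$ be the set of points $[M]$ with $M\ne 0$ and $\mathrm{rk}(M)\le t$; let $\hat n=|\widehat{\mathcal D}_t(\ell,m)|$, enumerate its points and choose representatives $M_1,\dots,M_{\hat n}$. The determinantal code $\widehat{C}_{\det}(t;\ell,m)\subseteq\mathbb{F}_q^{\hat n}$ is the set of vectors $(f(M_1),\dots,f(M_{\hat n}))$ for $f=\sum_{i,j}f_{ij}X_{ij}$ ranging over linear forms in the entries of an $\ell\times m$ matrix of indeterminates. *)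

theory Defs
  imports "Jordan_Normal_Form.DL_Rank"
begin

definition mrank :: "'a::field mat \<Rightarrow> nat" where
  "mrank A = vec_space.rank (dim_row A) A"

definition mu :: "'a::{finite,field} itself \<Rightarrow> nat \<Rightarrow> nat \<Rightarrow> nat \<Rightarrow> nat" where
  "mu _ t a b = card {M :: 'a mat. M \<in> carrier_mat a b \<and> mrank M = t}"

text \<open>tau_r(M) = m_11 + ... + m_rr (0-based indices here).\<close>
definition tau :: "nat \<Rightarrow> 'a::field mat \<Rightarrow> 'a" where
  "tau r M = (\<Sum>i<r. M $$ (i, i))"

definition what :: "'a::{finite,field} itself \<Rightarrow> nat \<Rightarrow> nat \<Rightarrow> nat \<Rightarrow> nat \<Rightarrow> real" where
  "what _ r t l m =
     real (card {M :: 'a mat. M \<in> carrier_mat l m \<and> 1 \<le> mrank M \<and> mrank M \<le> t \<and> tau r M \<noteq> 0})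
     / real (card (UNIV :: 'a set) - 1)"

text \<open>Nonzero l x m matrices of rank at most t (affine cone over hat D_t(l,m)).\<close>
definition Dhat :: "'a::{finite,field} itself \<Rightarrow> nat \<Rightarrow> nat \<Rightarrow> nat \<Rightarrow> 'a mat set" where
  "Dhat _ t l m = {M. M \<in> carrier_mat l m \<and> M \<noteq> 0\<^sub>m l m \<and> mrank M \<le> t}"

text \<open>R is a set of representatives of the projective points of hat D_t(l,m).\<close>
definition is_rep_set :: "'a::{finite,field} mat set \<Rightarrow> nat \<Rightarrow> nat \<Rightarrow> nat \<Rightarrow> bool" where
  "is_rep_set R t l m \<longleftrightarrow> R \<subseteq> Dhat TYPE('a) t l m \<and>
     (\<forall>M \<in> Dhat TYPE('a) t l m. \<exists>!N. N \<in> R \<and> (\<exists>c. c \<noteq> 0 \<and> M = c \<cdot>\<^sub>m N))"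

text \<open>Codeword of the linear form with coefficient matrix F, as a function on the
  representative set R (zero outside R).\<close>
definition codeword :: "nat \<Rightarrow> nat \<Rightarrow> 'a::field mat set \<Rightarrow> 'a mat \<Rightarrow> 'a mat \<Rightarrow> 'a" where
  "codeword l m R F = (\<lambda>N. if N \<in> R then (\<Sum>i<l. \<Sum>j<m. F $$ (i, j) * N $$ (i, j)) else 0)"

definition det_code :: "nat \<Rightarrow> nat \<Rightarrow> 'a::field mat set \<Rightarrow> ('a mat \<Rightarrow> 'a) set" where
  "det_code l m R = {codeword l m R F | F. F \<in> carrier_mat l m}"

definition wt :: "'a mat set \<Rightarrow> ('a mat \<Rightarrow> 'b::zero) \<Rightarrow> nat" where
  "wt R c = card {N \<in> R. c N \<noteq> 0}"

definition min_dist :: "'a mat set \<Rightarrow> ('a mat \<Rightarrow> 'b::zero) set \<Rightarrow> nat" where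
  "min_dist R C = Min {wt R c | c. c \<in> C \<and> c \<noteq> (\<lambda>_. 0)}"

definition min_wt_words :: "'a mat set \<Rightarrow> ('a mat \<Rightarrow> 'b::zero) set \<Rightarrow> ('a mat \<Rightarrow> 'b) set" where
  "min_wt_words R C = {c \<in> C. c \<noteq> (\<lambda>_. 0) \<and> wt R c = min_dist R C}"

definition lin_span :: "('b \<Rightarrow> 'a::field) set \<Rightarrow> ('b \<Rightarrow> 'a) set" where
  "lin_span W = {(\<lambda>x. \<Sum>w\<in>S. a w * w x) | S a. finite S \<and> S \<subseteq> W}"

end

theory Submission
  imports Defs
begin

lemma mrank_le_factor:
  fixes A :: "'a::field mat"
  assumes A: "A \<in> carrier_mat n nc" and U: "U \<in> carrier_mat n k"
    and V: "V \<in> carrier_mat k nc" and AUV: "A = U * V"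
  shows "mrank A \<le> k"
proof -
  interpret vec_space "TYPE('a)" n .
  obtain S where maxS: "maximal S (\<lambda>T. T \<subseteq> set (cols A) \<and> lin_indpt T)"
    using maximal_exists[of "(\<lambda>T. T \<subseteq> set (cols A) \<and> lin_indpt T)" "card (set (cols A))" "{}"]
    by (meson List.finite_set card_mono empty_iff empty_subsetI finite_lin_indpt2 rev_finite_subset)
  have rk: "mrank A = card S" unfolding mrank_def using rank_card_indpt[OF A maxS] A by simp
  have S1: "S \<subseteq> set (cols A)" and S2: "lin_indpt S" using maxS unfolding maximal_def by auto
  have finS: "finite S" using S1 finite_subset by blast
  have colsU: "set (cols U) \<subseteq> carrier_vec n" using U cols_dim by blast
  have "set (cols A) \<subseteq> span (set (cols U))"
  proof
    fix c assume "c \<in> set (cols A)"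
    then obtain j where j: "j < nc" "c = col A j" using A
      by (metis carrier_matD(2) cols_length cols_nth in_set_conv_nth)
    have "c = U *\<^sub>v col V j" using j A U V AUV by (auto simp: col_mult2)
    moreover have "col V j \<in> carrier_vec k" using V j by auto
    moreover have "U *\<^sub>v col V j \<in> carrier_vec n" using U V j by auto
    ultimately have "c \<in> col_space U" unfolding col_space_eq[OF U] using U by auto
    then show "c \<in> span (set (cols U))" unfolding col_space_def .
  qed
  then have "S \<subseteq> span (set (cols U))" using S1 by blast
  from replacement[OF finS _ colsU S2 this]
  have "card S \<le> card (set (cols U))" by auto
  also have "\<dots> \<le> length (cols U)" by (rule card_length)
  also have "\<dots> = k" using U by simp
  finally show ?thesis using rk by simp
qed

lemma mrank_factor:
  fixes A :: "'a::field mat"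
  assumes A: "A \<in> carrier_mat n nc"
  shows "\<exists>U V. U \<in> carrier_mat n (mrank A) \<and> V \<in> carrier_mat (mrank A) nc \<and> A = U * V"
proof -
  interpret vec_space "TYPE('a)" n .
  obtain S where maxS: "maximal S (\<lambda>T. T \<subseteq> set (cols A) \<and> lin_indpt T)"
    using maximal_exists[of "(\<lambda>T. T \<subseteq> set (cols A) \<and> lin_indpt T)" "card (set (cols A))" "{}"]
    by (meson List.finite_set card_mono empty_iff empty_subsetI finite_lin_indpt2 rev_finite_subset)
  have rk: "mrank A = card S" unfolding mrank_def using rank_card_indpt[OF A maxS] A by simp
  have S1: "S \<subseteq> set (cols A)" and S2: "lin_indpt S" using maxS unfolding maximal_def by auto
  have finS: "finite S" using S1 finite_subset by blast
  have colsA: "set (cols A) \<subseteq> carrier_vec n" using A cols_dim by blast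
  have Scar: "S \<subseteq> carrier_vec n" using S1 colsA by blast
  have inspan: "set (cols A) \<subseteq> span S"
  proof
    fix c assume c: "c \<in> set (cols A)"
    show "c \<in> span S"
    proof (rule ccontr)
      assume nc: "c \<notin> span S"
      have cS: "c \<notin> S" using nc in_own_span[OF Scar] by blast
      have ccar: "c \<in> carrier_vec n" using c colsA by blast
      have "lin_indpt (S \<union> {c})" using lin_dep_iff_in_span[OF Scar S2 _ cS] ccar nc by auto
      moreover have "S \<union> {c} \<subseteq> set (cols A)" using S1 c by auto
      ultimately have "S \<union> {c} \<subseteq> S" using maxS unfolding maximal_def by blast
      then show False using cS by blast
    qed
  qed
  obtain xs where xs: "set xs = S" "distinct xs" using finite_distinct_list[OF finS] by blast
  define k where "k = mrank A"
  have lxs: "length xs = k" using xs rk k_def distinct_card by fastforce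
  define U where "U = mat_of_cols n xs"
  have U: "U \<in> carrier_mat n k" unfolding U_def using lxs by auto
  have colsU: "cols U = xs" unfolding U_def using xs Scar by (intro cols_mat_of_cols) auto
  have ex: "\<exists>x. x \<in> carrier_vec k \<and> U *\<^sub>v x = col A j" if j: "j < nc" for j
  proof -
    have "col A j \<in> set (cols A)" using j A by (metis carrier_matD(2) cols_length cols_nth nth_mem)
    then have "col A j \<in> col_space U" using inspan unfolding col_space_def colsU xs(1) by blast
    then show ?thesis unfolding col_space_eq[OF U] using U by auto
  qed
  define x where "x j = (SOME x. x \<in> carrier_vec k \<and> U *\<^sub>v x = col A j)" for j
  have x: "x j \<in> carrier_vec k \<and> U *\<^sub>v x j = col A j" if "j < nc" for j
    unfolding x_def using someI_ex[OF ex[OF that]] .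
  define V where "V = mat k nc (\<lambda>(a,j). x j $ a)"
  have V: "V \<in> carrier_mat k nc" unfolding V_def by auto
  have colV: "\<And>j. j < nc \<Longrightarrow> col V j = x j"
  proof -
    fix j assume j: "j < nc"
    have xk: "x j \<in> carrier_vec k" using x[OF j] by blast
    show "col V j = x j" unfolding V_def using j xk by (intro eq_vecI) auto
  qed
  have "A = U * V"
  proof (rule eq_matI)
    fix i j assume i: "i < dim_row (U * V)" and j: "j < dim_col (U * V)"
    have i': "i < n" and j': "j < nc" using i j U V by auto
    have "(U * V) $$ (i, j) = (U *\<^sub>v col V j) $ i" using i' j' U V by auto
    also have "\<dots> = col A j $ i" using colV[OF j'] x[OF j'] by simp
    also have "\<dots> = A $$ (i,j)" using A i' j' by auto
    finally show "A $$ (i, j) = (U * V) $$ (i, j)" by simp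
  qed (use A U V in auto)
  then show ?thesis using U V k_def by blast
qed

lemma mrank_mult_left:
  fixes A :: "'a::field mat"
  assumes A: "A \<in> carrier_mat n p" and B: "B \<in> carrier_mat p nc"
  shows "mrank (A * B) \<le> mrank A"
proof -
  obtain U V where U: "U \<in> carrier_mat n (mrank A)" and V: "V \<in> carrier_mat (mrank A) p" and e: "A = U * V"
    using mrank_factor[OF A] by blast
  have "A * B = U * (V * B)" using e U V B by (simp add: assoc_mult_mat)
  then show ?thesis using U V B A by (intro mrank_le_factor[of _ n nc U _ "V * B"]) auto
qed

lemma mrank_mult_right:
  fixes A :: "'a::field mat"
  assumes A: "A \<in> carrier_mat n p" and B: "B \<in> carrier_mat p nc"
  shows "mrank (A * B) \<le> mrank B"
proof -
  obtain U V where U: "U \<in> carrier_mat p (mrank B)" and V: "V \<in> carrier_mat (mrank B) nc" and e: "B = U * V"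
    using mrank_factor[OF B] by blast
  have "A * B = (A * U) * V" using e U V A by (simp add: assoc_mult_mat)
  then show ?thesis using U V B A by (intro mrank_le_factor[of _ n nc "A * U" _ "V"]) auto
qed

lemma mrank_le_row:
  fixes A :: "'a::field mat"
  assumes A: "A \<in> carrier_mat n nc"
  shows "mrank A \<le> n"
  using A by (intro mrank_le_factor[of A n nc "1\<^sub>m n" n A]) auto

lemma mrank_le_col:
  fixes A :: "'a::field mat"
  assumes A: "A \<in> carrier_mat n nc"
  shows "mrank A \<le> nc"
  using A by (intro mrank_le_factor[of A n nc A nc "1\<^sub>m nc"]) auto

lemma mrank_zero_iff:
  fixes A :: "'a::field mat"
  assumes A: "A \<in> carrier_mat n nc"
  shows "mrank A = 0 \<longleftrightarrow> A = 0\<^sub>m n nc"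
proof
  assume "mrank A = 0"
  then obtain U V where U: "U \<in> carrier_mat n 0" and V: "V \<in> carrier_mat 0 nc" and e: "A = U * V"
    using mrank_factor[OF A] by auto
  show "A = 0\<^sub>m n nc"
    by (rule eq_matI) (use U V e in \<open>auto simp: scalar_prod_def\<close>)
next
  assume "A = 0\<^sub>m n nc"
  then have "A = 0\<^sub>m n 0 * 0\<^sub>m 0 nc" by (auto intro!: eq_matI simp: scalar_prod_def)
  then have "mrank A \<le> 0" using A by (intro mrank_le_factor[of A n nc "0\<^sub>m n 0" 0 "0\<^sub>m 0 nc"]) auto
  then show "mrank A = 0" by simp
qed

lemma mrank_transpose_le:
  fixes A :: "'a::field mat"
  assumes A: "A \<in> carrier_mat n nc"
  shows "mrank (A\<^sup>T) \<le> mrank A"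
proof -
  obtain U V where U: "U \<in> carrier_mat n (mrank A)" and V: "V \<in> carrier_mat (mrank A) nc" and e: "A = U * V"
    using mrank_factor[OF A] by blast
  have "A\<^sup>T = V\<^sup>T * U\<^sup>T" using e U V by (simp add: transpose_mult)
  then show ?thesis using U V A by (intro mrank_le_factor[of _ nc n "V\<^sup>T" _ "U\<^sup>T"]) auto
qed

lemma mrank_transpose:
  fixes A :: "'a::field mat"
  assumes A: "A \<in> carrier_mat n nc"
  shows "mrank (A\<^sup>T) = mrank A"
  using mrank_transpose_le[OF A] mrank_transpose_le[of "A\<^sup>T" nc n] A by auto

lemma mrank_smult:
  fixes A :: "'a::field mat"
  assumes A: "A \<in> carrier_mat n nc"
  shows "mrank (c \<cdot>\<^sub>m A) \<le> mrank A"
proof -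
  have "c \<cdot>\<^sub>m A = (c \<cdot>\<^sub>m 1\<^sub>m n) * A" using A by (auto intro!: eq_matI)
  then show ?thesis using mrank_mult_right[of "c \<cdot>\<^sub>m 1\<^sub>m n" n n A nc] A by auto
qed

lemma mrank_full_kernel:
  fixes X :: "'a::field mat"
  assumes X: "X \<in> carrier_mat n k" and rk: "mrank X = k"
    and v: "v \<in> carrier_vec k" and Xv: "X *\<^sub>v v = 0\<^sub>v n"
  shows "v = 0\<^sub>v k"
proof -
  interpret vec_space "TYPE('a)" n .
  obtain S where maxS: "maximal S (\<lambda>T. T \<subseteq> set (cols X) \<and> lin_indpt T)"
    using maximal_exists[of "(\<lambda>T. T \<subseteq> set (cols X) \<and> lin_indpt T)" "card (set (cols X))" "{}"]
    by (meson List.finite_set card_mono empty_iff empty_subsetI finite_lin_indpt2 rev_finite_subset)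
  have r: "rank X = card S" using rank_card_indpt[OF X maxS] .
  have "S \<subseteq> set (cols X)" using maxS unfolding maximal_def by auto
  then have "card S \<le> card (set (cols X))" by (simp add: card_mono)
  then have "k \<le> card (set (cols X))" using r rk X unfolding mrank_def by simp
  moreover have "card (set (cols X)) \<le> length (cols X)" by (rule card_length)
  ultimately have "card (set (cols X)) = length (cols X)" using X by simp
  then have dist: "distinct (cols X)" by (simp add: card_distinct)
  have rk': "rank X = k" using rk X unfolding mrank_def by simp
  have li: "lin_indpt (set (cols X))" using full_rank_lin_indpt[OF X rk' dist] .
  show ?thesis
  proof (rule ccontr)
    assume "v \<noteq> 0\<^sub>v k"
    then have "lin_dep (set (cols X))" using lin_depI[OF X v _ Xv dist] by blast
    then show False using li by blast
  qed
qed

lemma mult_unit_vec_col: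
  fixes A :: "'a::comm_ring_1 mat"
  assumes A: "A \<in> carrier_mat n k" and i: "i < k"
  shows "A *\<^sub>v unit_vec k i = col A i"
proof (rule eq_vecI)
  fix r assume "r < dim_vec (col A i)"
  then have r: "r < n" using A by simp
  have "row A r \<in> carrier_vec k" using A r by auto
  have "row A r \<bullet> unit_vec k i = row A r $ i" by (rule scalar_prod_right_unit[OF i])
  then show "(A *\<^sub>v unit_vec k i) $ r = col A i $ r" using A r i by simp
qed (use A in simp)

lemma mrank_from_kernel:
  fixes X :: "'a::field mat"
  assumes X: "X \<in> carrier_mat n k"
    and ker: "\<And>v. v \<in> carrier_vec k \<Longrightarrow> X *\<^sub>v v = 0\<^sub>v n \<Longrightarrow> v = 0\<^sub>v k"
  shows "mrank X = k"
proof -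
  interpret vec_space "TYPE('a)" n .
  have dist: "distinct (cols X)"
  proof (rule ccontr)
    assume "\<not> distinct (cols X)"
    then obtain i j where ij: "i < k" "j < k" "i \<noteq> j" "cols X ! i = cols X ! j"
      using X by (metis carrier_matD(2) cols_length distinct_conv_nth)
    define v :: "'a vec" where "v = unit_vec k i - unit_vec k j"
    have vc: "v \<in> carrier_vec k" unfolding v_def by auto
    have "v $ i = 1" unfolding v_def using ij by simp
    then have vn: "v \<noteq> 0\<^sub>v k" using ij by auto
    have ci: "col X i = col X j" using ij X by auto
    have "X *\<^sub>v v = X *\<^sub>v unit_vec k i - X *\<^sub>v unit_vec k j"
      unfolding v_def using X by (simp add: mult_minus_distrib_mat_vec)
    also have "\<dots> = col X i - col X j" using X ij by (simp add: mult_unit_vec_col)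
    also have "\<dots> = 0\<^sub>v n" using ci X by auto
    finally have "X *\<^sub>v v = 0\<^sub>v n" .
    then show False using ker[OF vc] vn by blast
  qed
  have li: "lin_indpt (set (cols X))"
  proof
    assume "lin_dep (set (cols X))"
    from lin_depE[OF X this dist] obtain v where "v \<in> carrier_vec k" "v \<noteq> 0\<^sub>v k" "X *\<^sub>v v = 0\<^sub>v n" .
    then show False using ker by blast
  qed
  show ?thesis using lin_indpt_full_rank[OF X dist li] X unfolding mrank_def by simp
qed

lemma extend_full_rank:
  fixes U :: "'a::field mat"
  assumes U: "U \<in> carrier_mat n k" and rk: "mrank U = k"
  shows "\<exists>P. P \<in> carrier_mat n n \<and> mrank P = n \<and> (\<forall>i<n. \<forall>j<k. P $$ (i,j) = U $$ (i,j))"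
proof -
  interpret vec_space "TYPE('a)" n .
  obtain S where maxS: "maximal S (\<lambda>T. T \<subseteq> set (cols U) \<and> lin_indpt T)"
    using maximal_exists[of "(\<lambda>T. T \<subseteq> set (cols U) \<and> lin_indpt T)" "card (set (cols U))" "{}"]
    by (meson List.finite_set card_mono empty_iff empty_subsetI finite_lin_indpt2 rev_finite_subset)
  have r: "rank U = card S" using rank_card_indpt[OF U maxS] .
  have "S \<subseteq> set (cols U)" using maxS unfolding maximal_def by auto
  then have "card S \<le> card (set (cols U))" by (simp add: card_mono)
  then have "k \<le> card (set (cols U))" using r rk U unfolding mrank_def by simp
  moreover have "card (set (cols U)) \<le> length (cols U)" by (rule card_length)
  ultimately have cardA: "card (set (cols U)) = k" using U by simp
  then have dist: "distinct (cols U)" using U by (simp add: card_distinct)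
  have rk': "rank U = k" using rk U unfolding mrank_def by simp
  have li: "lin_indpt (set (cols U))" using full_rank_lin_indpt[OF U rk' dist] .
  have Acar: "set (cols U) \<subseteq> carrier_vec n" using U cols_dim by blast
  have Bcar: "set (unit_vecs n) \<subseteq> carrier_vec n" by (rule unit_vecs_carrier)
  have AB: "set (cols U) \<subseteq> span (set (unit_vecs n))" using Acar span_unit_vecs_is_carrier by simp
  note rr = replacement[of "set (cols U)" "set (unit_vecs n)", OF List.finite_set List.finite_set Bcar li AB]
  from rr obtain C where C0: "finite C \<and> C \<subseteq> carrier_vec n \<and> C \<subseteq> span (set (unit_vecs n)) \<and> C \<inter> set (cols U) = {}
    \<and> int (card C) \<le> int (card (set (unit_vecs n :: 'a vec list))) - int (card (set (cols U)))
    \<and> span (set (cols U) \<union> C) = span (set (unit_vecs n))" ..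
  have C: "finite C" "C \<subseteq> carrier_vec n" "C \<inter> set (cols U) = {}"
    "int (card C) \<le> int (card (set (unit_vecs n :: 'a vec list))) - int (card (set (cols U)))"
    "span (set (cols U) \<union> C) = span (set (unit_vecs n))" using C0 by simp_all
  have cB: "card (set (unit_vecs n :: 'a vec list)) = n" using unit_vecs_distinct distinct_card unit_vecs_length by metis
  have gen: "span (set (cols U) \<union> C) = carrier_vec n" using C(5) span_unit_vecs_is_carrier by simp
  have finAC: "finite (set (cols U) \<union> C)" using C(1) by simp
  have ACcar: "set (cols U) \<union> C \<subseteq> carrier_vec n" using Acar C(2) by simp
  have "card (set (cols U) \<union> C) \<ge> dim" using gen_ge_dim[OF finAC] ACcar gen by simp
  then have cAC: "card (set (cols U) \<union> C) \<ge> n" using dim_is_n by simp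
  have cAC2: "card (set (cols U) \<union> C) = k + card C" using C(1,3) cardA by (simp add: card_Un_disjoint inf_commute)
  have cC: "card C = n - k" using C(4) cB cardA cAC cAC2 by linarith
  have kn: "k \<le> n" using C(4) cB cardA by linarith
  have bas: "basis (set (cols U) \<union> C)"
    using dim_gen_is_basis[OF finAC] ACcar gen cAC2 cC kn dim_is_n by simp
  then have liAC: "lin_indpt (set (cols U) \<union> C)" unfolding basis_def by blast
  obtain cs where cs: "set cs = C" "distinct cs" using finite_distinct_list[OF C(1)] by blast
  define ws where "ws = cols U @ cs"
  have wsd: "distinct ws" unfolding ws_def using dist cs C(3) by auto
  have wsl: "length ws = n" unfolding ws_def using cs cC kn U distinct_card by fastforce
  have wscar: "set ws \<subseteq> carrier_vec n" unfolding ws_def using Acar C(2) cs by auto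
  define P where "P = mat_of_cols n ws"
  have P: "P \<in> carrier_mat n n" unfolding P_def using wsl by auto
  have colsP: "cols P = ws" unfolding P_def using wscar by (intro cols_mat_of_cols) auto
  have "lin_indpt (set (cols P))" unfolding colsP ws_def using liAC cs by simp
  moreover have "distinct (cols P)" using colsP wsd by simp
  ultimately have "rank P = n" using lin_indpt_full_rank[OF P] by blast
  then have rP: "mrank P = n" unfolding mrank_def using P by simp
  have "\<forall>i<n. \<forall>j<k. P $$ (i,j) = U $$ (i,j)"
  proof (intro allI impI)
    fix i j assume i: "i < n" and j: "j < k"
    have "P $$ (i,j) = ws ! j $ i" unfolding P_def using i j kn wsl by (simp add: mat_of_cols_def)
    also have "ws ! j = cols U ! j" unfolding ws_def using j U by (simp add: nth_append)
    also have "\<dots> = col U j" using j U by simp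
    finally show "P $$ (i,j) = U $$ (i,j)" using i j U by simp
  qed
  then show ?thesis using P rP by blast
qed

definition Emat :: "nat \<Rightarrow> nat \<Rightarrow> nat \<Rightarrow> 'a::{zero,one} mat" where
  "Emat l m k = mat l m (\<lambda>(i,j). if i = j \<and> i < k then 1 else 0)"

lemma normal_form:
  fixes F :: "'a::field mat"
  assumes F: "F \<in> carrier_mat l m"
  shows "\<exists>P Q. P \<in> carrier_mat l l \<and> Q \<in> carrier_mat m m \<and> mrank P = l \<and> mrank Q = m
     \<and> F = P * Emat l m (mrank F) * Q"
proof -
  define k where "k = mrank F"
  obtain U V where U: "U \<in> carrier_mat l k" and V: "V \<in> carrier_mat k m" and e: "F = U * V"
    using mrank_factor[OF F] unfolding k_def by blast
  have rU: "mrank U = k" using mrank_mult_left[OF U V] mrank_le_col[OF U] e k_def by simp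
  have rV: "mrank V = k" using mrank_mult_right[OF U V] mrank_le_row[OF V] e k_def by simp
  have kl: "k \<le> l" using mrank_le_row[OF F] k_def by simp
  have km: "k \<le> m" using mrank_le_col[OF F] k_def by simp
  have VT: "V\<^sup>T \<in> carrier_mat m k" using V by simp
  have rVT: "mrank (V\<^sup>T) = k" using mrank_transpose[OF V] rV by simp
  obtain P where P: "P \<in> carrier_mat l l" "mrank P = l" "\<forall>i<l. \<forall>j<k. P $$ (i,j) = U $$ (i,j)"
    using extend_full_rank[OF U rU] by blast
  obtain Q' where Q': "Q' \<in> carrier_mat m m" "mrank Q' = m" "\<forall>i<m. \<forall>j<k. Q' $$ (i,j) = V\<^sup>T $$ (i,j)"
    using extend_full_rank[OF VT rVT] by blast
  define Q where "Q = Q'\<^sup>T"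
  have Q: "Q \<in> carrier_mat m m" unfolding Q_def using Q' by simp
  have rQ: "mrank Q = m" unfolding Q_def using mrank_transpose[OF Q'(1)] Q'(2) by simp
  have Qe: "Q $$ (a,j) = V $$ (a,j)" if "a < k" "j < m" for a j
    unfolding Q_def using Q' that V km by auto
  have PE: "(P * Emat l m k) $$ (i,a) = (if a < k then P $$ (i,a) else 0)" if i: "i < l" and a: "a < m" for i a
  proof -
    have "(P * Emat l m k) $$ (i,a) = (\<Sum>b = 0..<l. P $$ (i,b) * (if b = a \<and> b < k then 1 else 0))"
      using P(1) i a by (simp add: Emat_def scalar_prod_def)
    also have "\<dots> = (\<Sum>b = 0..<l. (if b = a then (if a < k then P $$ (i,a) else 0) else 0))"
      by (rule sum.cong) auto
    also have "\<dots> = (if a < k then P $$ (i,a) else 0)" using kl by (auto simp: sum.delta)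
    finally show ?thesis .
  qed
  have "F = P * Emat l m k * Q"
  proof (rule eq_matI)
    fix i j assume i: "i < dim_row (P * Emat l m k * Q)" and j: "j < dim_col (P * Emat l m k * Q)"
    have i': "i < l" and j': "j < m" using i j P Q by (auto simp: Emat_def)
    have "(P * Emat l m k * Q) $$ (i,j) = (\<Sum>a = 0..<m. (P * Emat l m k) $$ (i,a) * Q $$ (a,j))"
      using P(1) Q i' j' by (simp add: Emat_def scalar_prod_def)
    also have "\<dots> = (\<Sum>a = 0..<m. (if a < k then P $$ (i,a) * Q $$ (a,j) else 0))"
      by (rule sum.cong) (auto simp: PE[OF i'])
    also have "\<dots> = (\<Sum>a = 0..<k. P $$ (i,a) * Q $$ (a,j))"
    proof -
      have "{0..<m} = {0..<k} \<union> {k..<m}" using km by auto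
      then have "(\<Sum>a = 0..<m. (if a < k then P $$ (i,a) * Q $$ (a,j) else 0))
         = (\<Sum>a = 0..<k. (if a < k then P $$ (i,a) * Q $$ (a,j) else 0))
           + (\<Sum>a = k..<m. (if a < k then P $$ (i,a) * Q $$ (a,j) else 0))"
        by (simp add: sum.union_disjoint)
      then show ?thesis by simp
    qed
    also have "\<dots> = (\<Sum>a = 0..<k. U $$ (i,a) * V $$ (a,j))"
      by (rule sum.cong) (use P(3) Qe i' j' kl in auto)
    also have "\<dots> = F $$ (i,j)" using e U V i' j' by (simp add: scalar_prod_def)
    finally show "F $$ (i,j) = (P * Emat l m k * Q) $$ (i,j)" by simp
  qed (use F P Q in \<open>auto simp: Emat_def\<close>)
  then have FF: "F = P * Emat l m (mrank F) * Q" unfolding k_def .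
  show ?thesis by (rule exI[of _ P], rule exI[of _ Q]) (use P(1,2) Q rQ FF in simp)
qed

definition inner :: "nat \<Rightarrow> nat \<Rightarrow> 'a::comm_ring_1 mat \<Rightarrow> 'a mat \<Rightarrow> 'a" where
  "inner l m F M = (\<Sum>i<l. \<Sum>j<m. F $$ (i, j) * M $$ (i, j))"

lemma codeword_inner: "codeword l m R F N = (if N \<in> R then inner l m F N else 0)"
  unfolding codeword_def inner_def by simp

lemma inner_mult_left:
  fixes P :: "'a::comm_ring_1 mat"
  assumes P: "P \<in> carrier_mat l l" and G: "G \<in> carrier_mat l m" and M: "M \<in> carrier_mat l m"
  shows "inner l m (P * G) M = inner l m G (P\<^sup>T * M)"
proof -
  have "inner l m (P * G) M = (\<Sum>i<l. \<Sum>j<m. (\<Sum>a<l. P $$ (i,a) * G $$ (a,j)) * M $$ (i,j))"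
    unfolding inner_def using P G M
    by (intro sum.cong refl) (auto simp: scalar_prod_def atLeast0LessThan)
  also have "\<dots> = (\<Sum>i<l. \<Sum>j<m. \<Sum>a<l. P $$ (i,a) * G $$ (a,j) * M $$ (i,j))"
    by (simp add: sum_distrib_right)
  also have "\<dots> = (\<Sum>i<l. \<Sum>a<l. \<Sum>j<m. P $$ (i,a) * G $$ (a,j) * M $$ (i,j))"
    by (rule sum.cong[OF refl], rule sum.swap)
  also have "\<dots> = (\<Sum>a<l. \<Sum>i<l. \<Sum>j<m. P $$ (i,a) * G $$ (a,j) * M $$ (i,j))"
    by (rule sum.swap)
  also have "\<dots> = (\<Sum>a<l. \<Sum>j<m. \<Sum>i<l. P $$ (i,a) * G $$ (a,j) * M $$ (i,j))"
    by (rule sum.cong[OF refl], rule sum.swap)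
  also have "\<dots> = (\<Sum>a<l. \<Sum>j<m. G $$ (a,j) * (\<Sum>i<l. P $$ (i,a) * M $$ (i,j)))"
    by (simp add: sum_distrib_left mult.commute mult.left_commute)
  also have "\<dots> = inner l m G (P\<^sup>T * M)"
    unfolding inner_def using P G M
    by (intro sum.cong refl) (auto simp: scalar_prod_def atLeast0LessThan)
  finally show ?thesis .
qed

lemma inner_mult_right:
  fixes Q :: "'a::comm_ring_1 mat"
  assumes Q: "Q \<in> carrier_mat m m" and G: "G \<in> carrier_mat l m" and M: "M \<in> carrier_mat l m"
  shows "inner l m (G * Q) M = inner l m G (M * Q\<^sup>T)"
proof -
  have "inner l m (G * Q) M = (\<Sum>i<l. \<Sum>j<m. (\<Sum>b<m. G $$ (i,b) * Q $$ (b,j)) * M $$ (i,j))"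
    unfolding inner_def using Q G M
    by (intro sum.cong refl) (auto simp: scalar_prod_def atLeast0LessThan)
  also have "\<dots> = (\<Sum>i<l. \<Sum>j<m. \<Sum>b<m. G $$ (i,b) * Q $$ (b,j) * M $$ (i,j))"
    by (simp add: sum_distrib_right)
  also have "\<dots> = (\<Sum>i<l. \<Sum>b<m. \<Sum>j<m. G $$ (i,b) * Q $$ (b,j) * M $$ (i,j))"
    by (rule sum.cong[OF refl], rule sum.swap)
  also have "\<dots> = (\<Sum>i<l. \<Sum>b<m. G $$ (i,b) * (\<Sum>j<m. M $$ (i,j) * Q $$ (b,j)))"
    by (simp add: sum_distrib_left mult.commute mult.left_commute)
  also have "\<dots> = inner l m G (M * Q\<^sup>T)"
    unfolding inner_def using Q G M
    by (intro sum.cong refl) (auto simp: scalar_prod_def atLeast0LessThan)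
  finally show ?thesis .
qed

lemma sum_if_less:
  fixes k l :: nat
  assumes "k \<le> l"
  shows "(\<Sum>i<l. if i < k then f i else (0::'b::comm_monoid_add)) = (\<Sum>i<k. f i)"
  using assms
proof (induction l)
  case 0
  then show ?case by simp
next
  case (Suc l)
  show ?case
  proof (cases "k = Suc l")
    case True
    then show ?thesis by (intro sum.cong) auto
  next
    case False
    then have "k \<le> l" using Suc.prems by simp
    then show ?thesis using Suc.IH by simp
  qed
qed

lemma inner_Emat:
  fixes M :: "'a::field mat"
  assumes "k \<le> l" "k \<le> m" "M \<in> carrier_mat l m"
  shows "inner l m (Emat l m k) M = tau k M"
proof -
  have "inner l m (Emat l m k) M = (\<Sum>i<l. \<Sum>j<m. (if j = i then (if i < k then M $$ (i,i) else 0) else 0))"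
    unfolding inner_def Emat_def by (intro sum.cong refl) auto
  also have "\<dots> = (\<Sum>i<l. (if i < k then M $$ (i,i) else 0))"
    by (intro sum.cong refl) (use assms in \<open>auto simp: sum.delta\<close>)
  also have "\<dots> = (\<Sum>i<k. M $$ (i,i))"
  proof -
    show ?thesis using sum_if_less[OF assms(1)] .
  qed
  finally show ?thesis unfolding tau_def .
qed

lemma inner_smult:
  fixes M :: "'a::comm_ring_1 mat"
  assumes "M \<in> carrier_mat l m"
  shows "inner l m F (c \<cdot>\<^sub>m M) = c * inner l m F M"
  unfolding inner_def using assms by (simp add: sum_distrib_left mult.left_commute)

lemma finite_carrier_mat:
  "finite (carrier_mat l m :: 'a::finite mat set)"
proof -
  have "carrier_mat l m \<subseteq> (\<lambda>f. mat l m f) ` (PiE ({..<l} \<times> {..<m}) (\<lambda>_. (UNIV :: 'a set)))"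
  proof
    fix M :: "'a mat" assume M: "M \<in> carrier_mat l m"
    let ?f = "restrict (\<lambda>ij. M $$ ij) ({..<l} \<times> {..<m})"
    have "M = mat l m ?f" using M by (auto intro!: eq_matI)
    moreover have "?f \<in> PiE ({..<l} \<times> {..<m}) (\<lambda>_. UNIV)" by auto
    ultimately show "M \<in> (\<lambda>f. mat l m f) ` (PiE ({..<l} \<times> {..<m}) (\<lambda>_. UNIV))" by blast
  qed
  moreover have "finite (PiE ({..<l} \<times> {..<m}) (\<lambda>_. (UNIV :: 'a set)))"
    by (intro finite_PiE) auto
  ultimately show ?thesis by (meson finite_imageI finite_subset)
qed

lemma finite_Dhat: "finite (Dhat TYPE('a::{finite,field}) t l m)"
  unfolding Dhat_def using finite_carrier_mat[of l m]
  by (rule finite_subset[rotated]) auto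

lemma full_rank_cancel_left:
  fixes A :: "'a::field mat"
  assumes A: "A \<in> carrier_mat n k" and rk: "mrank A = k"
    and B1: "B1 \<in> carrier_mat k p" and B2: "B2 \<in> carrier_mat k p" and e: "A * B1 = A * B2"
  shows "B1 = B2"
proof (rule eq_matI)
  fix i j assume i: "i < dim_row B2" and j: "j < dim_col B2"
  have "A *\<^sub>v (col B1 j - col B2 j) = A *\<^sub>v col B1 j - A *\<^sub>v col B2 j"
    using A B1 B2 j by (intro mult_minus_distrib_mat_vec) auto
  also have "\<dots> = col (A * B1) j - col (A * B2) j"
  proof -
    have jp: "j < p" using j B2 by simp
    show ?thesis by (simp only: col_mult2[OF A B1 jp] col_mult2[OF A B2 jp])
  qed
  also have "\<dots> = 0\<^sub>v n" using e A B2 j by (auto intro!: eq_vecI)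
  finally have "col B1 j - col B2 j = 0\<^sub>v k"
    using mrank_full_kernel[OF A rk] B1 B2 j by simp
  then have "(col B1 j - col B2 j) $ i = 0" using i B2 by simp
  then show "B1 $$ (i,j) = B2 $$ (i,j)" using i j B1 B2 by simp
qed (use B1 B2 in auto)

lemma psi_inj:
  fixes P :: "'a::field mat"
  assumes P: "P \<in> carrier_mat l l" "mrank P = l" and Q: "Q \<in> carrier_mat m m" "mrank Q = m"
    and M1: "M1 \<in> carrier_mat l m" and M2: "M2 \<in> carrier_mat l m"
    and e: "P\<^sup>T * M1 * Q\<^sup>T = P\<^sup>T * M2 * Q\<^sup>T"
  shows "M1 = M2"
proof -
  have PT: "P\<^sup>T \<in> carrier_mat l l" "mrank (P\<^sup>T) = l" using P mrank_transpose[OF P(1)] by auto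
  have "P\<^sup>T * (M1 * Q\<^sup>T) = P\<^sup>T * (M2 * Q\<^sup>T)" using e P Q M1 M2 by (simp add: assoc_mult_mat)
  then have "M1 * Q\<^sup>T = M2 * Q\<^sup>T"
    using full_rank_cancel_left[OF PT(1) PT(2), of "M1 * Q\<^sup>T" m "M2 * Q\<^sup>T"] Q(1) M1 M2 by auto
  then have "(M1 * Q\<^sup>T)\<^sup>T = (M2 * Q\<^sup>T)\<^sup>T" by simp
  then have "Q * M1\<^sup>T = Q * M2\<^sup>T" using Q M1 M2 by (simp add: transpose_mult)
  then have "M1\<^sup>T = M2\<^sup>T"
    using full_rank_cancel_left[OF Q(1) Q(2), of "M1\<^sup>T" l "M2\<^sup>T"] M1 M2 by auto
  then show ?thesis by (metis transpose_transpose)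
qed

lemma NF_invariant:
  fixes G :: "'a::{finite,field} mat"
  assumes P: "P \<in> carrier_mat l l" "mrank P = l" and Q: "Q \<in> carrier_mat m m" "mrank Q = m"
    and G: "G \<in> carrier_mat l m"
  shows "card {M \<in> Dhat TYPE('a) t l m. inner l m (P * G * Q) M \<noteq> 0}
       = card {M \<in> Dhat TYPE('a) t l m. inner l m G M \<noteq> 0}"
proof -
  let ?D = "Dhat TYPE('a) t l m"
  define psi where "psi M = P\<^sup>T * M * Q\<^sup>T" for M
  have psi_car: "psi M \<in> carrier_mat l m" if "M \<in> carrier_mat l m" for M
    unfolding psi_def using that P Q by auto
  have inj: "inj_on psi ?D"
  proof (rule inj_onI)
    fix M1 M2 assume a: "M1 \<in> ?D" "M2 \<in> ?D" "psi M1 = psi M2"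
    have "M1 \<in> carrier_mat l m" "M2 \<in> carrier_mat l m" using a(1,2) unfolding Dhat_def by auto
    then show "M1 = M2" using psi_inj[OF P Q, of M1 M2] a(3) unfolding psi_def by blast
  qed
  have sub: "psi ` ?D \<subseteq> ?D"
  proof
    fix N assume "N \<in> psi ` ?D"
    then obtain M where M: "M \<in> ?D" and N: "N = psi M" by blast
    have Mc: "M \<in> carrier_mat l m" and Mz: "M \<noteq> 0\<^sub>m l m" and Mr: "mrank M \<le> t"
      using M unfolding Dhat_def by auto
    have "mrank N \<le> mrank M"
    proof -
      have "mrank N \<le> mrank (P\<^sup>T * M)" unfolding N psi_def
        using mrank_mult_left[of "P\<^sup>T * M" l m "Q\<^sup>T" m] P Q Mc by auto
      also have "\<dots> \<le> mrank M" using mrank_mult_right[of "P\<^sup>T" l l M m] P Mc by auto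
      finally show ?thesis .
    qed
    moreover have "N \<noteq> 0\<^sub>m l m"
    proof
      assume N0: "N = 0\<^sub>m l m"
      have "psi (0\<^sub>m l m) = 0\<^sub>m l m" unfolding psi_def using P Q by simp
      then have "psi M = psi (0\<^sub>m l m)" using N N0 by simp
      then have "M = 0\<^sub>m l m" using psi_inj[OF P Q Mc, of "0\<^sub>m l m"] unfolding psi_def by simp
      then show False using Mz by simp
    qed
    ultimately show "N \<in> ?D" using psi_car[OF Mc] Mr N unfolding Dhat_def by auto
  qed
  have eq: "psi ` ?D = ?D"
    by (rule card_subset_eq[OF finite_Dhat sub]) (rule card_image[OF inj])
  have inn: "inner l m (P * G * Q) M = inner l m G (psi M)" if "M \<in> carrier_mat l m" for M
  proof -
    have "inner l m (P * G * Q) M = inner l m (P * G) (M * Q\<^sup>T)"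
      using inner_mult_right[of Q m "P * G" l M] Q P G that by auto
    also have "\<dots> = inner l m G (P\<^sup>T * (M * Q\<^sup>T))"
      using inner_mult_left[of P l G m "M * Q\<^sup>T"] Q P G that by auto
    also have "P\<^sup>T * (M * Q\<^sup>T) = psi M" unfolding psi_def using P Q that by (simp add: assoc_mult_mat)
    finally show ?thesis .
  qed
  have s1: "{M \<in> ?D. inner l m (P * G * Q) M \<noteq> 0} = {M \<in> ?D. inner l m G (psi M) \<noteq> 0}"
    using inn unfolding Dhat_def by auto
  have s2: "psi ` {M \<in> ?D. inner l m G (psi M) \<noteq> 0} = {N \<in> ?D. inner l m G N \<noteq> 0}"
  proof
    show "psi ` {M \<in> ?D. inner l m G (psi M) \<noteq> 0} \<subseteq> {N \<in> ?D. inner l m G N \<noteq> 0}"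
      using sub by blast
    show "{N \<in> ?D. inner l m G N \<noteq> 0} \<subseteq> psi ` {M \<in> ?D. inner l m G (psi M) \<noteq> 0}"
    proof
      fix N assume N: "N \<in> {N \<in> ?D. inner l m G N \<noteq> 0}"
      then obtain M where "M \<in> ?D" "N = psi M" using eq by (metis (no_types, lifting) imageE mem_Collect_eq)
      then show "N \<in> psi ` {M \<in> ?D. inner l m G (psi M) \<noteq> 0}" using N by blast
    qed
  qed
  have s3: "inj_on psi {M \<in> ?D. inner l m G (psi M) \<noteq> 0}"
    using inj by (rule inj_on_subset) blast
  show ?thesis unfolding s1 using card_image[OF s3] s2 by simp
qed

definition colop :: "'a::field mat \<Rightarrow> nat \<Rightarrow> 'a \<Rightarrow> 'a mat" where
  "colop N j d = mat (dim_row N) (dim_col N) (\<lambda>(i,k). if k = 0 then N $$ (i,0) + d * N $$ (i,j) else N $$ (i,k))"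

definition Smat :: "nat \<Rightarrow> nat \<Rightarrow> 'a::field \<Rightarrow> 'a mat" where
  "Smat m j d = mat m m (\<lambda>(a,b). if a = b then 1 else if a = j \<and> b = 0 then d else 0)"

lemma colop_carrier[simp]: "N \<in> carrier_mat l m \<Longrightarrow> colop N j d \<in> carrier_mat l m"
  unfolding colop_def by auto

lemma colop_index: "N \<in> carrier_mat l m \<Longrightarrow> i < l \<Longrightarrow> k < m \<Longrightarrow>
  colop N j d $$ (i,k) = (if k = 0 then N $$ (i,0) + d * N $$ (i,j) else N $$ (i,k))"
  unfolding colop_def by auto

lemma colop_mult:
  fixes N :: "'a::field mat"
  assumes N: "N \<in> carrier_mat l m" and j: "j < m" "j \<noteq> 0"
  shows "colop N j d = N * Smat m j d"
proof (rule eq_matI)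
  fix i k assume i: "i < dim_row (N * Smat m j d)" and k: "k < dim_col (N * Smat m j d)"
  have i': "i < l" and k': "k < m" using i k N by (auto simp: Smat_def)
  have "(N * Smat m j d) $$ (i,k) = (\<Sum>a = 0..<m. N $$ (i,a) * Smat m j d $$ (a,k))"
    using N i' k' by (simp add: Smat_def scalar_prod_def)
  also have "\<dots> = (\<Sum>a = 0..<m. (if a = k then N $$ (i,k) else 0) + (if a = j then (if k = 0 then d * N $$ (i,j) else 0) else 0))"
    by (rule sum.cong) (use j k' in \<open>auto simp: Smat_def\<close>)
  also have "\<dots> = N $$ (i,k) + (if k = 0 then d * N $$ (i,j) else 0)"
    using j k' by (simp add: sum.distrib)
  also have "\<dots> = colop N j d $$ (i,k)" using colop_index[OF N i' k'] by simp
  finally show "colop N j d $$ (i,k) = (N * Smat m j d) $$ (i,k)" by simp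
qed (use N in \<open>auto simp: colop_def Smat_def\<close>)

lemma colop_inv:
  fixes N :: "'a::field mat"
  assumes N: "N \<in> carrier_mat l m" and j: "j < m" "j \<noteq> 0"
  shows "colop (colop N j d) j (-d) = N"
  by (rule eq_matI) (use N j in \<open>auto simp: colop_def\<close>)

lemma mrank_colop:
  fixes N :: "'a::field mat"
  assumes N: "N \<in> carrier_mat l m" and j: "j < m" "j \<noteq> 0"
  shows "mrank (colop N j d) = mrank N"
proof -
  have Sm: "Smat m j e \<in> carrier_mat m m" for e :: 'a unfolding Smat_def by auto
  have "mrank (colop N j d) \<le> mrank N"
    using colop_mult[OF N j] mrank_mult_left[OF N Sm] by simp
  moreover have "mrank N \<le> mrank (colop N j d)"
  proof -
    have C: "colop N j d \<in> carrier_mat l m" using N by simp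
    have "N = colop (colop N j d) j (-d)" using colop_inv[OF N j] by simp
    also have "\<dots> = colop N j d * Smat m j (-d)" using colop_mult[OF C j] by simp
    finally have "N = colop N j d * Smat m j (-d)" .
    then show ?thesis using mrank_mult_left[OF C Sm, of "-d"] by simp
  qed
  ultimately show ?thesis by simp
qed

definition zero00 :: "'a::field mat \<Rightarrow> 'a mat" where
  "zero00 N = mat (dim_row N) (dim_col N) (\<lambda>(i,k). if i = 0 \<and> k = 0 then 0 else N $$ (i,k))"

lemma zero00_carrier[simp]: "N \<in> carrier_mat l m \<Longrightarrow> zero00 N \<in> carrier_mat l m"
  unfolding zero00_def by auto

lemma zero00_index: "N \<in> carrier_mat l m \<Longrightarrow> i < l \<Longrightarrow> k < m \<Longrightarrow>
  zero00 N $$ (i,k) = (if i = 0 \<and> k = 0 then 0 else N $$ (i,k))"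
  unfolding zero00_def by auto

lemma mrank_zero00:
  fixes N :: "'a::field mat"
  assumes N: "N \<in> carrier_mat l m" and row0: "\<And>k. 1 \<le> k \<Longrightarrow> k < m \<Longrightarrow> N $$ (0,k) = 0"
  shows "mrank (zero00 N) \<le> mrank N"
proof -
  define Dg :: "'a mat" where "Dg = mat l l (\<lambda>(a,b). if a = b \<and> a \<noteq> 0 then 1 else 0)"
  have Dg: "Dg \<in> carrier_mat l l" unfolding Dg_def by auto
  have "zero00 N = Dg * N"
  proof (rule eq_matI)
    fix i k assume i: "i < dim_row (Dg * N)" and k: "k < dim_col (Dg * N)"
    have i': "i < l" and k': "k < m" using i k N Dg by auto
    have "(Dg * N) $$ (i,k) = (\<Sum>a = 0..<l. Dg $$ (i,a) * N $$ (a,k))"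
      using N Dg i' k' by (simp add: scalar_prod_def)
    also have "\<dots> = (\<Sum>a = 0..<l. if a = i then (if i \<noteq> 0 then N $$ (i,k) else 0) else 0)"
      by (rule sum.cong) (use i' in \<open>auto simp: Dg_def\<close>)
    also have "\<dots> = (if i \<noteq> 0 then N $$ (i,k) else 0)" using i' by simp
    also have "\<dots> = zero00 N $$ (i,k)"
      using zero00_index[OF N i' k'] row0[of k] k' by auto
    finally show "zero00 N $$ (i,k) = (Dg * N) $$ (i,k)" by simp
  qed (use N Dg in \<open>auto simp: zero00_def\<close>)
  then show ?thesis using mrank_mult_right[OF Dg N] by simp
qed


definition wv :: "nat \<Rightarrow> nat \<Rightarrow> nat \<Rightarrow> 'a::field" where
  "wv t i j = (if i = 1 \<and> j = 1 then -1 else if 2 \<le> i \<and> i \<le> t \<and> j = i - 1 then 1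
     else if i = 1 \<and> j = t \<and> 2 \<le> t then 1 else 0)"

definition Wm :: "nat \<Rightarrow> nat \<Rightarrow> nat \<Rightarrow> 'a::field mat" where
  "Wm t l m = mat l m (\<lambda>(i,j). wv t i j)"

definition Wm' :: "nat \<Rightarrow> nat \<Rightarrow> nat \<Rightarrow> 'a::field mat" where
  "Wm' t l m = mat l m (\<lambda>(i,j). if i = 0 \<and> j = 0 then 1 else wv t i j)"

lemma wv_nz: "1 \<le> t \<Longrightarrow> wv t i j \<noteq> (0::'a::field) \<Longrightarrow> 1 \<le> i \<and> i \<le> t"
  unfolding wv_def by (auto split: if_splits)

lemma sum_delta_mult:
  fixes n a :: nat
  shows "(\<Sum>j = 0..<n. (if j = a then c else 0) * f j) = (if a < n then c * f a else (0::'a::comm_semiring_1))"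
proof -
  have "(\<Sum>j = 0..<n. (if j = a then c else 0) * f j) = (\<Sum>j = 0..<n. (if j = a then c * f a else 0))"
    by (rule sum.cong) auto
  also have "\<dots> = (if a < n then c * f a else 0)" by (subst sum.delta) auto
  finally show ?thesis .
qed

lemma Wm_rank_le:
  assumes t: "1 \<le> t" "t < l"
  shows "mrank (Wm t l m :: 'a::field mat) \<le> t"
proof -
  define U :: "'a mat" where "U = mat l t (\<lambda>(i,a). if i = a + 1 then 1 else 0)"
  define V :: "'a mat" where "V = mat t m (\<lambda>(a,j). wv t (a + 1) j)"
  have U: "U \<in> carrier_mat l t" and V: "V \<in> carrier_mat t m" unfolding U_def V_def by auto
  have "Wm t l m = U * V"
  proof (rule eq_matI)
    fix i j assume i: "i < dim_row (U * V)" and j: "j < dim_col (U * V)"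
    have i': "i < l" and j': "j < m" using i j U V by auto
    have "(U * V) $$ (i,j) = (\<Sum>a = 0..<t. (if i = a + 1 then 1 else 0) * wv t (a+1) j)"
      using U V i' j' by (simp add: U_def V_def scalar_prod_def)
    also have "\<dots> = (\<Sum>a = 0..<t. (if a = i - 1 then (if 1 \<le> i then wv t i j else 0) else 0))"
      by (rule sum.cong) auto
    also have "\<dots> = (if i - 1 < t then (if 1 \<le> i then wv t i j else 0) else 0)"
      by (simp add: sum.delta)
    also have "\<dots> = wv t i j"
    proof -
      have h: "wv t i j \<noteq> (0::'a) \<Longrightarrow> 1 \<le> i \<and> i \<le> t" by (rule wv_nz[OF t(1)])
      show ?thesis
      proof (cases "1 \<le> i \<and> i \<le> t")
        case True
        then have "i - 1 < t" by arith
        then show ?thesis using True by simp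
      next
        case False
        then have w0: "wv t i j = (0::'a)" using h by blast
        show ?thesis by (simp add: w0)
      qed
    qed
    finally show "Wm t l m $$ (i,j) = (U * V) $$ (i,j)" using i' j' by (simp add: Wm_def)
  qed (use U V in \<open>auto simp: Wm_def\<close>)
  then show ?thesis using mrank_le_factor[of "Wm t l m" l m U t V] U V by (simp add: Wm_def)
qed

lemma Wm'_rank_ge:
  assumes t: "1 \<le> t" "t < l" "l \<le> m"
  shows "t + 1 \<le> mrank (Wm' t l m :: 'a::field mat)"
proof -
  define X :: "'a mat" where "X = mat l (t+1) (\<lambda>(i,j). Wm' t l m $$ (i,j))"
  define Sel :: "'a mat" where "Sel = mat m (t+1) (\<lambda>(a,b). if a = b then 1 else 0)"
  have X: "X \<in> carrier_mat l (t+1)" unfolding X_def by auto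
  have W': "Wm' t l m \<in> carrier_mat l m" unfolding Wm'_def by auto
  have Sel: "Sel \<in> carrier_mat m (t+1)" unfolding Sel_def by auto
  have XS: "X = Wm' t l m * Sel"
  proof (rule eq_matI)
    fix i j assume i: "i < dim_row (Wm' t l m * Sel)" and j: "j < dim_col (Wm' t l m * Sel)"
    have i': "i < l" and j': "j < t + 1" using i j W' Sel by (auto simp: Wm'_def)
    have "(Wm' t l m * Sel) $$ (i,j) = (\<Sum>a = 0..<m. Wm' t l m $$ (i,a) * (if a = j then 1 else 0))"
    proof -
      have d: "dim_row (Wm' t l m :: 'a mat) = l" "dim_col (Wm' t l m :: 'a mat) = m" using W' by auto
      show ?thesis using i' j' t by (simp add: d Sel_def scalar_prod_def)
    qed
    also have "\<dots> = (\<Sum>a = 0..<m. (if a = j then Wm' t l m $$ (i,j) else 0))"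
      by (rule sum.cong) auto
    also have "\<dots> = Wm' t l m $$ (i,j)" using j' t by (simp add: sum.delta)
    finally show "X $$ (i,j) = (Wm' t l m * Sel) $$ (i,j)" using i' j' X_def by simp
  qed (use X W' Sel in \<open>auto simp: Wm'_def\<close>)
  have Xe: "X $$ (i,j) = (if i = 0 \<and> j = 0 then 1 else wv t i j)" if "i < l" "j < t + 1" for i j
    using that t unfolding X_def Wm'_def by simp
  have ker: "v = 0\<^sub>v (t+1)" if v: "v \<in> carrier_vec (t+1)" and Xv: "X *\<^sub>v v = 0\<^sub>v l" for v
  proof -
    have row: "(\<Sum>j = 0..<t+1. X $$ (i,j) * v $ j) = 0" if i: "i < l" for i
    proof -
      have "(X *\<^sub>v v) $ i = 0" using Xv i by simp
      then show ?thesis using X v i by (simp add: scalar_prod_def)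
    qed
    have v0: "v $ 0 = 0"
    proof -
      have "(\<Sum>j = 0..<t+1. X $$ (0,j) * v $ j) = (\<Sum>j = 0..<t+1. (if j = 0 then 1 else 0) * v $ j)"
        by (rule sum.cong) (use Xe t in \<open>auto simp: wv_def\<close>)
      also have "\<dots> = v $ 0" by (simp only: sum_delta_mult) simp
      finally show ?thesis using row[of 0] t by simp
    qed
    have vmid: "v $ (i - 1) = 0" if i: "2 \<le> i" "i \<le> t" for i
    proof -
      have il: "i < l" using i t by simp
      have "(\<Sum>j = 0..<t+1. X $$ (i,j) * v $ j) = (\<Sum>j = 0..<t+1. (if j = i - 1 then 1 else 0) * v $ j)"
        by (rule sum.cong) (use Xe il i in \<open>auto simp: wv_def\<close>)
      also have "\<dots> = v $ (i - 1)" using i by (simp only: sum_delta_mult) simp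
      finally show ?thesis using row[OF il] by simp
    qed
    have vlow: "v $ j = 0" if j: "1 \<le> j" "j < t" for j
      using vmid[of "j + 1"] j by simp
    have v1: "- v $ 1 + (if 2 \<le> t then v $ t else 0) = 0"
    proof -
      have "(\<Sum>j = 0..<t+1. X $$ (1,j) * v $ j)
          = (\<Sum>j = 0..<t+1. (if j = 1 then -1 else 0) * v $ j + (if j = t then (if 2 \<le> t then 1 else 0) else 0) * v $ j)"
        by (rule sum.cong) (use Xe t in \<open>auto simp: wv_def\<close>)
      also have "\<dots> = (\<Sum>j = 0..<t+1. (if j = 1 then -1 else 0) * v $ j) + (\<Sum>j = 0..<t+1. (if j = t then (if 2 \<le> t then 1 else 0) else 0) * v $ j)"
        by (rule sum.distrib)
      also have "\<dots> = - v $ 1 + (if 2 \<le> t then v $ t else 0)"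
        using t by (simp only: sum_delta_mult) simp
      finally show ?thesis using row[of 1] t by simp
    qed
    have vt: "v $ t = 0"
    proof (cases "2 \<le> t")
      case True
      then have "v $ 1 = 0" using vlow[of 1] by simp
      then show ?thesis using v1 True by simp
    next
      case False
      then have "t = 1" using t by simp
      then show ?thesis using v1 by simp
    qed
    show ?thesis
    proof (rule eq_vecI)
      fix j assume "j < dim_vec (0\<^sub>v (t+1) :: 'a vec)"
      then have j: "j < t + 1" by simp
      show "v $ j = 0\<^sub>v (t+1) $ j"
        using j v0 vlow[of j] vt by (cases "j = 0"; cases "j = t") auto
    qed (use v in simp)
  qed
  have "mrank X = t + 1" by (rule mrank_from_kernel[OF X ker])
  then show ?thesis using mrank_mult_left[OF W' Sel] XS by simp
qed


lemma tau_split: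
  assumes "1 \<le> r"
  shows "tau r M = M $$ (0,0) + (\<Sum>i\<in>{1..<r}. M $$ (i,i))"
proof -
  have "tau r M = (\<Sum>i\<in>{0..<r}. M $$ (i,i))" unfolding tau_def by (simp add: atLeast0LessThan)
  also have "\<dots> = M $$ (0,0) + (\<Sum>i\<in>{Suc 0..<r}. M $$ (i,i))"
    using assms by (subst sum.atLeast_Suc_lessThan) auto
  finally show ?thesis by simp
qed

lemma tau_one: "tau 1 M = M $$ (0,0)"
  unfolding tau_def by simp

lemma ineq_main:
  fixes t l m r :: nat
  assumes t: "1 \<le> t" "t < l" "l \<le> m" and r: "2 \<le> r" "r \<le> l"
  shows "card {M :: 'a::{finite,field} mat. M \<in> carrier_mat l m \<and> 1 \<le> mrank M \<and> mrank M \<le> t \<and> tau 1 M \<noteq> 0}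
       < card {M :: 'a mat. M \<in> carrier_mat l m \<and> 1 \<le> mrank M \<and> mrank M \<le> t \<and> tau r M \<noteq> 0}"
proof -
  define D where "D = {M :: 'a mat. M \<in> carrier_mat l m \<and> 1 \<le> mrank M \<and> mrank M \<le> t}"
  define g where "g M = (\<Sum>i\<in>{1..<r}. M $$ (i,i))" for M :: "'a mat"
  have finD: "finite D" unfolding D_def
    by (rule finite_subset[OF _ finite_carrier_mat[of l m]]) auto
  have tr: "tau r M = M $$ (0,0) + g M" for M :: "'a mat"
    unfolding g_def using tau_split[of r M] r by simp
  define A where "A = {M \<in> D. M $$ (0,0) \<noteq> 0}"
  define B where "B = {M \<in> D. M $$ (0,0) + g M \<noteq> 0}"
  define X where "X = {M \<in> D. M $$ (0,0) \<noteq> 0 \<and> M $$ (0,0) + g M = 0}"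
  define Y where "Y = {M \<in> D. M $$ (0,0) = 0 \<and> g M \<noteq> 0}"
  have LA: "{M :: 'a mat. M \<in> carrier_mat l m \<and> 1 \<le> mrank M \<and> mrank M \<le> t \<and> tau 1 M \<noteq> 0} = A"
    unfolding A_def D_def tau_one by auto
  have LB: "{M :: 'a mat. M \<in> carrier_mat l m \<and> 1 \<le> mrank M \<and> mrank M \<le> t \<and> tau r M \<noteq> 0} = B"
    unfolding B_def D_def tr by auto
  have finA: "finite (A \<inter> B)" "finite X" "finite Y"
    using finD unfolding A_def B_def X_def Y_def by auto
  have cA: "card A = card (A \<inter> B) + card X"
  proof -
    have "A = (A \<inter> B) \<union> X" "(A \<inter> B) \<inter> X = {}" unfolding A_def B_def X_def by auto
    then show ?thesis using finA card_Un_disjoint by metis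
  qed
  have cB: "card B = card (A \<inter> B) + card Y"
  proof -
    have "B = (A \<inter> B) \<union> Y" "(A \<inter> B) \<inter> Y = {}" unfolding A_def B_def Y_def by auto
    then show ?thesis using finA card_Un_disjoint by metis
  qed
  have l0: "0 < l" and m0: "0 < m" and rl: "r \<le> m" using t r by auto
  define rc where "rc M = (\<exists>j. 1 \<le> j \<and> j < m \<and> M $$ (0,j) \<noteq> 0)" for M :: "'a mat"
  define J where "J M = (LEAST j. 1 \<le> j \<and> j < m \<and> M $$ (0,j) \<noteq> 0)" for M :: "'a mat"
  define phi where "phi M = (if rc M then colop M (J M) (- (M $$ (0,0) / M $$ (0, J M))) else zero00 M)"
    for M :: "'a mat"
  have Jp: "1 \<le> J M \<and> J M < m \<and> M $$ (0, J M) \<noteq> 0" if "rc M" for M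
    using that unfolding rc_def J_def by (metis (mono_tags, lifting) LeastI)
  have phi_car: "phi M \<in> carrier_mat l m" if "M \<in> carrier_mat l m" for M
    unfolding phi_def using that by auto
  have phi_other: "phi M $$ (i,k) = M $$ (i,k)" if "M \<in> carrier_mat l m" "i < l" "k < m" "k \<noteq> 0" for M i k
    unfolding phi_def using that colop_index[OF that(1-3)] zero00_index[OF that(1-3)] by auto
  have phi_col0: "phi M $$ (i,0) = (if rc M then M $$ (i,0) + (- (M $$ (0,0) / M $$ (0, J M))) * M $$ (i, J M)
      else (if i = 0 then 0 else M $$ (i,0)))" if "M \<in> carrier_mat l m" "i < l" for M i
    unfolding phi_def using that colop_index[OF that(1-2) m0] zero00_index[OF that(1-2) m0] by auto
  have phi00: "phi M $$ (0,0) = 0" if "M \<in> carrier_mat l m" for M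
  proof (cases "rc M")
    case True
    then have "M $$ (0, J M) \<noteq> 0" using Jp by blast
    then show ?thesis using phi_col0[OF that l0] True by (simp add: field_simps)
  next
    case False
    then show ?thesis using phi_col0[OF that l0] by simp
  qed
  have phi_rank: "mrank (phi M) \<le> mrank M" if M: "M \<in> carrier_mat l m" for M
  proof (cases "rc M")
    case True
    then have "J M < m" "J M \<noteq> 0" using Jp[OF True] by auto
    then show ?thesis using mrank_colop[OF M] True unfolding phi_def by simp
  next
    case False
    then have "\<And>k. 1 \<le> k \<Longrightarrow> k < m \<Longrightarrow> M $$ (0,k) = 0" unfolding rc_def by blast
    then show ?thesis using mrank_zero00[OF M] False unfolding phi_def by simp
  qed
  have phi_g: "g (phi M) = g M" if M: "M \<in> carrier_mat l m" for M
    unfolding g_def by (rule sum.cong) (use phi_other[OF M] r rl in auto)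
  have phi_rc: "rc (phi M) = rc M" if M: "M \<in> carrier_mat l m" for M
    unfolding rc_def using phi_other[OF M l0] by auto
  have phi_J: "J (phi M) = J M" if M: "M \<in> carrier_mat l m" for M
  proof -
    have "(\<lambda>j. 1 \<le> j \<and> j < m \<and> phi M $$ (0,j) \<noteq> 0) = (\<lambda>j. 1 \<le> j \<and> j < m \<and> M $$ (0,j) \<noteq> 0)"
      using phi_other[OF M l0] by (intro ext) auto
    then show ?thesis unfolding J_def by simp
  qed
  have nz: "N \<noteq> 0\<^sub>m l m" if "g N \<noteq> 0" for N :: "'a mat"
  proof
    assume "N = 0\<^sub>m l m"
    then have "g N = 0" unfolding g_def using r rl by (intro sum.neutral) auto
    then show False using that by simp
  qed
  have rk1: "1 \<le> mrank N" if "N \<in> carrier_mat l m" "g N \<noteq> 0" for N :: "'a mat"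
    using mrank_zero_iff[OF that(1)] nz[OF that(2)] by linarith
  have img: "phi ` X \<subseteq> Y"
  proof
    fix N assume "N \<in> phi ` X"
    then obtain M where M: "M \<in> X" and N: "N = phi M" by blast
    have Mc: "M \<in> carrier_mat l m" and Mr: "mrank M \<le> t" and M0: "M $$ (0,0) \<noteq> 0"
      and Mg: "M $$ (0,0) + g M = 0" using M unfolding X_def D_def by auto
    have gN: "g N \<noteq> 0" using phi_g[OF Mc] N Mg M0 by (metis add.right_neutral add_left_cancel)
    have Nc: "N \<in> carrier_mat l m" using phi_car[OF Mc] N by simp
    show "N \<in> Y" unfolding Y_def D_def
      using Nc rk1[OF Nc gN] phi_rank[OF Mc] Mr N phi00[OF Mc] gN by auto
  qed
  have inj: "inj_on phi X"
  proof (rule inj_onI)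
    fix M1 M2 assume M1: "M1 \<in> X" and M2: "M2 \<in> X" and e: "phi M1 = phi M2"
    have M1c: "M1 \<in> carrier_mat l m" and M1g: "M1 $$ (0,0) + g M1 = 0" using M1 unfolding X_def D_def by auto
    have M2c: "M2 \<in> carrier_mat l m" and M2g: "M2 $$ (0,0) + g M2 = 0" using M2 unfolding X_def D_def by auto
    have g12: "g M1 = g M2" using phi_g[OF M1c] phi_g[OF M2c] e by simp
    have c12: "M1 $$ (0,0) = M2 $$ (0,0)" using M1g M2g g12 by (metis add_right_cancel)
    have oth: "M1 $$ (i,k) = M2 $$ (i,k)" if "i < l" "k < m" "k \<noteq> 0" for i k
      using phi_other[OF M1c that] phi_other[OF M2c that] e by simp
    have rc12: "rc M1 = rc M2" using phi_rc[OF M1c] phi_rc[OF M2c] e by simp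
    have J12: "J M1 = J M2" using phi_J[OF M1c] phi_J[OF M2c] e by simp
    show "M1 = M2"
    proof (rule eq_matI)
      fix i k assume i: "i < dim_row M2" and k: "k < dim_col M2"
      have i': "i < l" and k': "k < m" using i k M2c by auto
      show "M1 $$ (i,k) = M2 $$ (i,k)"
      proof (cases "k = 0")
        case False
        then show ?thesis using oth i' k' by simp
      next
        case k0: True
        have e0: "phi M1 $$ (i,0) = phi M2 $$ (i,0)" using e by simp
        show ?thesis
        proof (cases "rc M1")
          case True
          then have rc2: "rc M2" using rc12 by simp
          have Jn: "J M1 < m" "J M1 \<noteq> 0" using Jp[OF True] by auto
          have "M1 $$ (0, J M1) = M2 $$ (0, J M1)" "M1 $$ (i, J M1) = M2 $$ (i, J M1)"
            using oth[OF l0 Jn] oth[OF i' Jn] by auto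
          then show ?thesis using e0 phi_col0[OF M1c i'] phi_col0[OF M2c i'] True rc2 J12 c12 k0 by simp
        next
          case False
          then have rc2: "\<not> rc M2" using rc12 by simp
          show ?thesis
          proof (cases "i = 0")
            case True then show ?thesis using c12 k0 by simp
          next
            case False
            then show ?thesis using e0 phi_col0[OF M1c i'] phi_col0[OF M2c i'] \<open>\<not> rc M1\<close> rc2 k0 by simp
          qed
        qed
      qed
    qed (use M1c M2c in auto)
  qed
  define W :: "'a mat" where "W = Wm t l m"
  have Wc: "W \<in> carrier_mat l m" unfolding W_def Wm_def by auto
  have Wi: "W $$ (i,k) = wv t i k" if "i < l" "k < m" for i k using that unfolding W_def Wm_def by simp
  have gW: "g W = -1"
  proof -
    have "g W = W $$ (1,1) + (\<Sum>i\<in>{Suc 1..<r}. W $$ (i,i))"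
      unfolding g_def using r by (subst sum.atLeast_Suc_lessThan) auto
    also have "(\<Sum>i\<in>{Suc 1..<r}. W $$ (i,i)) = 0"
      by (rule sum.neutral) (use Wi r rl in \<open>auto simp: wv_def\<close>)
    also have "W $$ (1,1) = -1" using Wi[of 1 1] r rl by (simp add: wv_def)
    finally show ?thesis by simp
  qed
  have WY: "W \<in> Y"
  proof -
    have "g W \<noteq> 0" using gW by simp
    moreover have "W $$ (0,0) = 0" using Wi[OF l0 m0] by (simp add: wv_def)
    moreover have "mrank W \<le> t" unfolding W_def by (rule Wm_rank_le[OF t(1,2)])
    ultimately show ?thesis unfolding Y_def D_def using Wc rk1[OF Wc] by auto
  qed
  have Wnot: "W \<notin> phi ` X"
  proof
    assume "W \<in> phi ` X"
    then obtain M where M: "M \<in> X" and WM: "W = phi M" by blast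
    have Mc: "M \<in> carrier_mat l m" and Mr: "mrank M \<le> t"
      and Mg: "M $$ (0,0) + g M = 0" using M unfolding X_def D_def by auto
    have "rc W = False" unfolding rc_def using Wi l0 by (auto simp: wv_def)
    then have nrc: "\<not> rc M" using phi_rc[OF Mc] WM by simp
    have "g M = -1" using phi_g[OF Mc] WM gW by simp
    then have M00: "M $$ (0,0) = 1" using Mg by (metis add.commute add_eq_0_iff2 minus_minus)
    have "M = Wm' t l m"
    proof (rule eq_matI)
      fix i k assume i: "i < dim_row (Wm' t l m :: 'a mat)" and k: "k < dim_col (Wm' t l m :: 'a mat)"
      have i': "i < l" and k': "k < m" using i k by (auto simp: Wm'_def)
      show "M $$ (i,k) = Wm' t l m $$ (i,k)"
      proof (cases "i = 0 \<and> k = 0")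
        case True
        then show ?thesis using M00 by (simp add: Wm'_def l0 m0)
      next
        case False
        have "M $$ (i,k) = phi M $$ (i,k)"
        proof (cases "k = 0")
          case True
          then have "i \<noteq> 0" using False by simp
          then show ?thesis using phi_col0[OF Mc i'] nrc True by simp
        next
          case False
          then show ?thesis using phi_other[OF Mc i' k'] by simp
        qed
        also have "\<dots> = W $$ (i,k)" using WM by simp
        also have "\<dots> = wv t i k" using Wi[OF i' k'] .
        finally show ?thesis using False i' k' by (auto simp: Wm'_def)
      qed
    qed (use Mc in \<open>auto simp: Wm'_def\<close>)
    then have "t + 1 \<le> mrank M" using Wm'_rank_ge[OF t] by simp
    then show False using Mr by simp
  qed
  have "card X = card (phi ` X)" using card_image[OF inj] by simp
  also have "\<dots> \<le> card (Y - {W})"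
    by (rule card_mono) (use finA img Wnot in auto)
  also have "\<dots> < card Y" using finA(3) WY by (rule card_Diff1_less)
  finally have "card X < card Y" .
  then show ?thesis unfolding LA LB using cA cB by simp
qed

lemma nonzero_entry:
  fixes N :: "'a::zero mat"
  assumes "N \<in> carrier_mat l m" "N \<noteq> 0\<^sub>m l m"
  shows "\<exists>i j. i < l \<and> j < m \<and> N $$ (i,j) \<noteq> 0"
proof (rule ccontr)
  assume "\<not> ?thesis"
  then have "N = 0\<^sub>m l m" using assms(1) by (intro eq_matI) auto
  then show False using assms(2) by simp
qed

lemma Dhat_iff:
  fixes M :: "'a::{finite,field} mat"
  shows "M \<in> Dhat TYPE('a) t l m \<longleftrightarrow> M \<in> carrier_mat l m \<and> 1 \<le> mrank M \<and> mrank M \<le> t"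
  unfolding Dhat_def using mrank_zero_iff[of M l m] by auto

lemma rep_count:
  fixes R :: "'a::{finite,field} mat set"
  assumes rep: "is_rep_set R t l m" and F: "F \<in> carrier_mat l m"
  shows "card {M \<in> Dhat TYPE('a) t l m. inner l m F M \<noteq> 0}
     = (card (UNIV::'a set) - 1) * wt R (codeword l m R F)"
proof -
  let ?D = "Dhat TYPE('a) t l m"
  have RD: "R \<subseteq> ?D" and uniq: "\<And>M. M \<in> ?D \<Longrightarrow> \<exists>!N. N \<in> R \<and> (\<exists>c. c \<noteq> 0 \<and> M = c \<cdot>\<^sub>m N)"
    using rep unfolding is_rep_set_def by auto
  define S where "S = {N \<in> R. inner l m F N \<noteq> 0}"
  have wtS: "wt R (codeword l m R F) = card S"
    unfolding wt_def S_def codeword_inner by (rule arg_cong[where f=card]) auto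
  define h where "h = (\<lambda>(c::'a, N::'a mat). c \<cdot>\<^sub>m N)"
  have Dc: "N \<in> carrier_mat l m" "N \<noteq> 0\<^sub>m l m" "mrank N \<le> t" if "N \<in> ?D" for N
    using that unfolding Dhat_def by auto
  have smD: "c \<cdot>\<^sub>m N \<in> ?D" if N: "N \<in> ?D" and c: "c \<noteq> 0" for c N
  proof -
    obtain i j where ij: "i < l" "j < m" "N $$ (i,j) \<noteq> 0" using nonzero_entry Dc[OF N] by blast
    have "(c \<cdot>\<^sub>m N) $$ (i,j) \<noteq> 0" using ij c Dc[OF N] by simp
    then have "c \<cdot>\<^sub>m N \<noteq> 0\<^sub>m l m" using ij by auto
    moreover have "mrank (c \<cdot>\<^sub>m N) \<le> t" using mrank_smult[OF Dc(1)[OF N], of c] Dc(3)[OF N] by simp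
    ultimately show ?thesis using Dc(1)[OF N] unfolding Dhat_def by auto
  qed
  have bij: "bij_betw h ({c::'a. c \<noteq> 0} \<times> S) {M \<in> ?D. inner l m F M \<noteq> 0}"
  proof (rule bij_betw_imageI)
    show "inj_on h ({c::'a. c \<noteq> 0} \<times> S)"
    proof (rule inj_onI)
      fix x y assume x: "x \<in> {c::'a. c \<noteq> 0} \<times> S" and y: "y \<in> {c::'a. c \<noteq> 0} \<times> S" and e: "h x = h y"
      obtain c1 N1 where x': "x = (c1, N1)" by (cases x)
      obtain c2 N2 where y': "y = (c2, N2)" by (cases y)
      have c1: "c1 \<noteq> 0" and N1: "N1 \<in> R" and c2: "c2 \<noteq> 0" and N2: "N2 \<in> R"
        using x y x' y' S_def by auto
      have e': "c1 \<cdot>\<^sub>m N1 = c2 \<cdot>\<^sub>m N2" using e x' y' h_def by simp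
      have MD: "c1 \<cdot>\<^sub>m N1 \<in> ?D" using smD[OF _ c1] N1 RD by blast
      have "N1 = N2" using uniq[OF MD] N1 N2 c1 c2 e' by blast
      moreover have "c1 = c2"
      proof -
        have N1D: "N1 \<in> ?D" using N1 RD by blast
        obtain i j where ij: "i < l" "j < m" "N1 $$ (i,j) \<noteq> 0" using nonzero_entry Dc[OF N1D] by blast
        have "(c1 \<cdot>\<^sub>m N1) $$ (i,j) = (c2 \<cdot>\<^sub>m N1) $$ (i,j)" using e' \<open>N1 = N2\<close> by simp
        then have "c1 * N1 $$ (i,j) = c2 * N1 $$ (i,j)" using ij Dc(1)[OF N1D] by simp
        then show ?thesis using ij(3) by simp
      qed
      ultimately show "x = y" using x' y' by simp
    qed
    show "h ` ({c::'a. c \<noteq> 0} \<times> S) = {M \<in> ?D. inner l m F M \<noteq> 0}"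
    proof
      show "h ` ({c::'a. c \<noteq> 0} \<times> S) \<subseteq> {M \<in> ?D. inner l m F M \<noteq> 0}"
      proof
        fix M assume "M \<in> h ` ({c::'a. c \<noteq> 0} \<times> S)"
        then obtain c N where c: "c \<noteq> 0" and N: "N \<in> S" and M: "M = c \<cdot>\<^sub>m N" unfolding h_def by auto
        have ND: "N \<in> ?D" using N RD S_def by blast
        have "inner l m F M = c * inner l m F N" using M inner_smult[OF Dc(1)[OF ND]] by simp
        then have "inner l m F M \<noteq> 0" using c N S_def by simp
        then show "M \<in> {M \<in> ?D. inner l m F M \<noteq> 0}" using smD[OF ND c] M by simp
      qed
      show "{M \<in> ?D. inner l m F M \<noteq> 0} \<subseteq> h ` ({c::'a. c \<noteq> 0} \<times> S)"
      proof
        fix M assume M: "M \<in> {M \<in> ?D. inner l m F M \<noteq> 0}"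
        then obtain N c where N: "N \<in> R" and c: "c \<noteq> 0" and MN: "M = c \<cdot>\<^sub>m N" using uniq by blast
        have ND: "N \<in> ?D" using N RD by blast
        have "inner l m F M = c * inner l m F N" using MN inner_smult[OF Dc(1)[OF ND]] by simp
        then have "inner l m F N \<noteq> 0" using M by auto
        then have "(c, N) \<in> {c::'a. c \<noteq> 0} \<times> S" using c N S_def by simp
        then show "M \<in> h ` ({c::'a. c \<noteq> 0} \<times> S)" using MN h_def by force
      qed
    qed
  qed
  have "card {M \<in> ?D. inner l m F M \<noteq> 0} = card ({c::'a. c \<noteq> 0} \<times> S)"
    using bij_betw_same_card[OF bij] by simp
  also have "\<dots> = card {c::'a. c \<noteq> 0} * card S" by (rule card_cartesian_product)
  also have "card {c::'a. c \<noteq> 0} = card (UNIV::'a set) - 1"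
  proof -
    have "{c::'a. c \<noteq> 0} = UNIV - {0}" by auto
    then show ?thesis by (simp add: card_Diff_singleton)
  qed
  finally show ?thesis using wtS by simp
qed

lemma wt_formula:
  fixes R :: "'a::{finite,field} mat set"
  assumes rep: "is_rep_set R t l m" and F: "F \<in> carrier_mat l m"
  shows "(card (UNIV::'a set) - 1) * wt R (codeword l m R F)
     = card {M :: 'a mat. M \<in> carrier_mat l m \<and> 1 \<le> mrank M \<and> mrank M \<le> t \<and> tau (mrank F) M \<noteq> 0}"
proof -
  let ?D = "Dhat TYPE('a) t l m"
  obtain P Q where P: "P \<in> carrier_mat l l" "mrank P = l" and Q: "Q \<in> carrier_mat m m" "mrank Q = m"
    and e: "F = P * Emat l m (mrank F) * Q" using normal_form[OF F] by blast
  have kl: "mrank F \<le> l" using mrank_le_row[OF F] .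
  have km: "mrank F \<le> m" using mrank_le_col[OF F] .
  have E: "(Emat l m (mrank F) :: 'a mat) \<in> carrier_mat l m" unfolding Emat_def by auto
  have "(card (UNIV::'a set) - 1) * wt R (codeword l m R F) = card {M \<in> ?D. inner l m F M \<noteq> 0}"
    using rep_count[OF rep F] by simp
  also have "\<dots> = card {M \<in> ?D. inner l m (Emat l m (mrank F)) M \<noteq> 0}"
    using NF_invariant[OF P Q E, of t] e by simp
  also have "{M \<in> ?D. inner l m (Emat l m (mrank F)) M \<noteq> 0}
      = {M :: 'a mat. M \<in> carrier_mat l m \<and> 1 \<le> mrank M \<and> mrank M \<le> t \<and> tau (mrank F) M \<noteq> 0}"
  proof -
    have DI: "\<And>M::'a mat. M \<in> ?D \<longleftrightarrow> M \<in> carrier_mat l m \<and> 1 \<le> mrank M \<and> mrank M \<le> t"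
      by (rule Dhat_iff)
    have IE: "\<And>M::'a mat. M \<in> carrier_mat l m \<Longrightarrow> inner l m (Emat l m (mrank F)) M = tau (mrank F) M"
      by (rule inner_Emat[OF kl km])
    show ?thesis using IE DI by auto
  qed
  finally show ?thesis .
qed


lemma rank1_prod:
  "mrank (mat l m (\<lambda>(i,j). u i * v j) :: 'a::field mat) \<le> 1"
proof -
  define U :: "'a mat" where "U = mat l 1 (\<lambda>(i,a). u i)"
  define V :: "'a mat" where "V = mat 1 m (\<lambda>(a,j). v j)"
  have "mat l m (\<lambda>(i,j). u i * v j) = U * V"
    by (rule eq_matI) (auto simp: U_def V_def scalar_prod_def)
  then show ?thesis
    by (intro mrank_le_factor[of _ l m U 1 V]) (auto simp: U_def V_def)
qed

lemma inner_minus: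
  fixes F G :: "'a::comm_ring_1 mat"
  assumes "F \<in> carrier_mat l m" "G \<in> carrier_mat l m"
  shows "inner l m (F - G) N = inner l m F N - inner l m G N"
  unfolding inner_def using assms
  by (simp add: sum_subtractf[symmetric] left_diff_distrib)

lemma inner_zero: "inner l m (0\<^sub>m l m) N = (0::'a::comm_ring_1)"
  unfolding inner_def by simp

lemma sum_list_filter_nz:
  "(\<Sum>w\<leftarrow>filter (\<lambda>w. w \<noteq> (\<lambda>_. 0)) xs. w N) = (\<Sum>w\<leftarrow>xs. w N :: 'b::comm_monoid_add)"
  by (induction xs) auto


theorem mainTheorem7:
  fixes R :: "'a::{finite,field} mat set"
    and t l m :: nat
  assumes "1 \<le> t" and "t < l" and "l \<le> m"
    and "is_rep_set R t l m"
  shows "(\<forall>r. 2 \<le> r \<and> r \<le> l \<longrightarrow> what TYPE('a) 1 t l m < what TYPE('a) r t l m)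
    \<and> card (min_wt_words R (det_code l m R)) = mu TYPE('a) 1 l m
    \<and> lin_span (min_wt_words R (det_code l m R)) = det_code l m R
    \<and> (\<forall>c \<in> det_code l m R. \<exists>cs. set cs \<subseteq> min_wt_words R (det_code l m R) \<and> length cs \<le> l
          \<and> c = (\<lambda>N. \<Sum>w\<leftarrow>cs. w N))"
proof -
  note t = assms(1-3) and rep = assms(4)
  let ?q = "card (UNIV::'a set)"
  define T where "T k = card {M :: 'a mat. M \<in> carrier_mat l m \<and> 1 \<le> mrank M \<and> mrank M \<le> t \<and> tau k M \<noteq> 0}" for k
  have l0: "0 < l" and m0: "0 < m" using t by auto
  have q2: "2 \<le> ?q"
  proof -
    have "card {0::'a, 1} \<le> ?q" by (rule card_mono) auto
    then show ?thesis by simp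
  qed
  have qpos: "0 < ?q - 1" using q2 by simp
  have Tlt: "T 1 < T r" if "2 \<le> r" "r \<le> l" for r
    unfolding T_def using ineq_main[OF t that] by simp
  have part1: "\<forall>r. 2 \<le> r \<and> r \<le> l \<longrightarrow> what TYPE('a) 1 t l m < what TYPE('a) r t l m"
  proof (intro allI impI)
    fix r assume "2 \<le> r \<and> r \<le> l"
    then have "real (T 1) < real (T r)" using Tlt by simp
    moreover have "0 < real (?q - 1)" using qpos by simp
    ultimately have "real (T 1) / real (?q - 1) < real (T r) / real (?q - 1)"
      by (rule divide_strict_right_mono)
    then show "what TYPE('a) 1 t l m < what TYPE('a) r t l m" unfolding what_def T_def .
  qed
  define cw where "cw F = codeword l m R F" for F
  have cwi: "cw F N = (if N \<in> R then inner l m F N else 0)" for F N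
    unfolding cw_def codeword_inner ..
  have wtF: "(?q - 1) * wt R (cw F) = T (mrank F)" if "F \<in> carrier_mat l m" for F
    unfolding cw_def T_def using wt_formula[OF rep that] .
  define F1 :: "'a mat" where "F1 = mat l m (\<lambda>(i,j). (if i = 0 then 1 else 0) * (if j = 0 then 1 else 0))"
  have F1c: "F1 \<in> carrier_mat l m" unfolding F1_def by auto
  have F1_00: "F1 $$ (0,0) = 1" unfolding F1_def using l0 m0 by simp
  have F1nz: "F1 \<noteq> 0\<^sub>m l m" using F1_00 l0 m0 by auto
  have rF1: "mrank F1 = 1"
    using rank1_prod[of l m "\<lambda>i. if i = 0 then 1 else (0::'a)" "\<lambda>j. if j = 0 then 1 else 0"]
      mrank_zero_iff[OF F1c] F1nz unfolding F1_def by linarith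
  have finC: "finite {M :: 'a mat. M \<in> carrier_mat l m \<and> P M}" for P
    by (rule finite_subset[OF _ finite_carrier_mat[of l m]]) auto
  have T1pos: "0 < T 1"
  proof -
    have "F1 \<in> {M :: 'a mat. M \<in> carrier_mat l m \<and> 1 \<le> mrank M \<and> mrank M \<le> t \<and> tau 1 M \<noteq> 0}"
    proof -
      have "tau 1 F1 = 1" using F1_00 tau_one[of F1] by simp
      then show ?thesis using F1c rF1 t by simp
    qed
    then show ?thesis unfolding T_def using finC[of "\<lambda>M. 1 \<le> mrank M \<and> mrank M \<le> t \<and> tau 1 M \<noteq> 0"]
      by (auto simp: card_gt_0_iff)
  qed
  define w1 where "w1 = wt R (cw F1)"
  have w1T: "(?q - 1) * w1 = T 1" unfolding w1_def using wtF[OF F1c] rF1 by simp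
  have Tge: "T 1 \<le> T k" if "1 \<le> k" "k \<le> l" for k
    using Tlt[of k] that by (cases "k = 1") auto
  have rk_nz: "1 \<le> mrank F" if "F \<in> carrier_mat l m" "F \<noteq> 0\<^sub>m l m" for F
    using mrank_zero_iff[OF that(1)] that(2) by linarith
  have wt_ge: "w1 \<le> wt R (cw F)" if F: "F \<in> carrier_mat l m" "F \<noteq> 0\<^sub>m l m" for F
  proof -
    have "(?q - 1) * w1 \<le> (?q - 1) * wt R (cw F)"
      using w1T wtF[OF F(1)] Tge[OF rk_nz[OF F] mrank_le_row[OF F(1)]] by simp
    then show ?thesis using qpos by simp
  qed
  have wt_gt: "w1 < wt R (cw F)" if F: "F \<in> carrier_mat l m" "2 \<le> mrank F" for F
  proof -
    have "(?q - 1) * w1 < (?q - 1) * wt R (cw F)"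
      using w1T wtF[OF F(1)] Tlt[OF F(2) mrank_le_row[OF F(1)]] by simp
    then show ?thesis using qpos by simp
  qed
  have w1pos: "0 < w1" using w1T T1pos by (metis mult_0_right neq0_conv)
  have wt0: "wt R (\<lambda>_. (0::'a)) = 0" unfolding wt_def by simp
  have cw_nz: "cw F \<noteq> (\<lambda>_. 0)" if F: "F \<in> carrier_mat l m" "F \<noteq> 0\<^sub>m l m" for F
    using wt_ge[OF F] w1pos wt0 by auto
  have cw_zero: "cw (0\<^sub>m l m) = (\<lambda>_. 0)" unfolding cwi[abs_def] inner_zero by simp
  have cw_minus: "cw (F - G) = (\<lambda>N. cw F N - cw G N)" if "F \<in> carrier_mat l m" "G \<in> carrier_mat l m" for F G
    unfolding cwi[abs_def] using inner_minus[OF that] by auto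
  have cw_inj: "inj_on cw (carrier_mat l m)"
  proof (rule inj_onI)
    fix F G assume F: "F \<in> carrier_mat l m" and G: "G \<in> carrier_mat l m" and e: "cw F = cw G"
    have "cw (F - G) = (\<lambda>_. 0)" using cw_minus[OF F G] e by simp
    moreover have "F - G \<in> carrier_mat l m" using F G by auto
    ultimately have "F - G = 0\<^sub>m l m" using cw_nz[of "F - G"] by blast
    then show "F = G"
    proof -
      assume z: "F - G = 0\<^sub>m l m"
      show "F = G"
      proof (rule eq_matI)
        fix i j assume "i < dim_row G" "j < dim_col G"
        then have ij: "i < l" "j < m" using G by auto
        have "(F - G) $$ (i,j) = 0" using z ij by simp
        then show "F $$ (i,j) = G $$ (i,j)" using F G ij by simp
      qed (use F G in auto)
    qed
  qed
  define C where "C = det_code l m R"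
  have C_eq: "C = cw ` carrier_mat l m" unfolding C_def det_code_def cw_def by auto
  have finCC: "finite C" unfolding C_eq using finite_carrier_mat by blast
  have nzC: "{c. c \<in> C \<and> c \<noteq> (\<lambda>_. 0)} = cw ` {F \<in> carrier_mat l m. F \<noteq> 0\<^sub>m l m}"
    unfolding C_eq using cw_nz cw_zero by auto
  have md: "min_dist R C = w1"
  proof -
    have eqs: "{wt R c | c. c \<in> C \<and> c \<noteq> (\<lambda>_. 0)} = (wt R) ` {c. c \<in> C \<and> c \<noteq> (\<lambda>_. 0)}" by auto
    show ?thesis unfolding min_dist_def eqs
    proof (rule Min_eqI)
      show "finite (wt R ` {c \<in> C. c \<noteq> (\<lambda>_. 0)})" using finCC by simp
      show "\<And>y. y \<in> wt R ` {c \<in> C. c \<noteq> (\<lambda>_. 0)} \<Longrightarrow> w1 \<le> y" using nzC wt_ge by auto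
      show "w1 \<in> wt R ` {c \<in> C. c \<noteq> (\<lambda>_. 0)}" unfolding nzC w1_def using F1c F1nz by blast
    qed
  qed
  have mww: "min_wt_words R C = cw ` {F \<in> carrier_mat l m. mrank F = 1}"
  proof
    show "min_wt_words R C \<subseteq> cw ` {F \<in> carrier_mat l m. mrank F = 1}"
    proof
      fix c assume c: "c \<in> min_wt_words R C"
      then have "c \<in> {c. c \<in> C \<and> c \<noteq> (\<lambda>_. 0)}" and wc: "wt R c = w1"
        unfolding min_wt_words_def md by auto
      then obtain F where F: "F \<in> carrier_mat l m" "F \<noteq> 0\<^sub>m l m" and cF: "c = cw F" unfolding nzC by blast
      have "\<not> 2 \<le> mrank F" using wt_gt[OF F(1)] wc cF by auto
      then have "mrank F = 1" using rk_nz[OF F] by simp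
      then show "c \<in> cw ` {F \<in> carrier_mat l m. mrank F = 1}" using F cF by blast
    qed
    show "cw ` {F \<in> carrier_mat l m. mrank F = 1} \<subseteq> min_wt_words R C"
    proof
      fix c assume "c \<in> cw ` {F \<in> carrier_mat l m. mrank F = 1}"
      then obtain F where F: "F \<in> carrier_mat l m" "mrank F = 1" and cF: "c = cw F" by blast
      have Fnz: "F \<noteq> 0\<^sub>m l m" using F mrank_zero_iff[OF F(1)] by auto
      have "(?q - 1) * wt R (cw F) = (?q - 1) * w1" using wtF[OF F(1)] F(2) w1T by simp
      then have "wt R c = w1" using qpos cF by simp
      moreover have "c \<in> C" "c \<noteq> (\<lambda>_. 0)" using cF C_eq F cw_nz[OF F(1) Fnz] by auto
      ultimately show "c \<in> min_wt_words R C" unfolding min_wt_words_def md by simp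
    qed
  qed
  have part2: "card (min_wt_words R C) = mu TYPE('a) 1 l m"
  proof -
    have "inj_on cw {F \<in> carrier_mat l m. mrank F = 1}" using cw_inj by (rule inj_on_subset) auto
    then have "card (min_wt_words R C) = card {F \<in> carrier_mat l m. mrank (F::'a mat) = 1}"
      unfolding mww by (simp add: card_image)
    then show ?thesis unfolding mu_def by simp
  qed
  have part3: "lin_span (min_wt_words R C) = C"
  proof
    show "lin_span (min_wt_words R C) \<subseteq> C"
    proof
      fix x assume "x \<in> lin_span (min_wt_words R C)"
      then obtain S a where x: "x = (\<lambda>y. \<Sum>w\<in>S. a w * w y)" and S: "finite S" "S \<subseteq> min_wt_words R C"
        unfolding lin_span_def by blast
      have SC: "\<exists>F. F \<in> carrier_mat l m \<and> w = cw F" if "w \<in> S" for w using S(2) mww that by blast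
      define Fw where "Fw w = (SOME F. F \<in> carrier_mat l m \<and> w = cw F)" for w
      have Fw: "Fw w \<in> carrier_mat l m \<and> w = cw (Fw w)" if "w \<in> S" for w
        unfolding Fw_def using someI_ex[OF SC[OF that]] .
      define G :: "'a mat" where "G = mat l m (\<lambda>(i,j). \<Sum>w\<in>S. a w * Fw w $$ (i,j))"
      have Gc: "G \<in> carrier_mat l m" unfolding G_def by auto
      have "x = cw G"
      proof (rule ext)
        fix y
        show "x y = cw G y"
        proof (cases "y \<in> R")
          case False
          have "w y = 0" if "w \<in> S" for w using Fw[OF that] cwi False by metis
          then show ?thesis using x cwi False by simp
        next
          case True
          have "x y = (\<Sum>w\<in>S. a w * inner l m (Fw w) y)"
            unfolding x using Fw cwi True by (intro sum.cong refl) metis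
          also have "\<dots> = (\<Sum>w\<in>S. \<Sum>i<l. \<Sum>j<m. a w * Fw w $$ (i,j) * y $$ (i,j))"
            unfolding inner_def by (simp add: sum_distrib_left mult.assoc)
          also have "\<dots> = (\<Sum>i<l. \<Sum>w\<in>S. \<Sum>j<m. a w * Fw w $$ (i,j) * y $$ (i,j))"
            by (rule sum.swap)
          also have "\<dots> = (\<Sum>i<l. \<Sum>j<m. \<Sum>w\<in>S. a w * Fw w $$ (i,j) * y $$ (i,j))"
            by (rule sum.cong[OF refl], rule sum.swap)
          also have "\<dots> = inner l m G y"
            unfolding inner_def G_def by (simp add: sum_distrib_right)
          also have "\<dots> = cw G y" using cwi True by simp
          finally show ?thesis .
        qed
      qed
      then show "x \<in> C" using Gc C_eq by blast
    qed
    show "C \<subseteq> lin_span (min_wt_words R C)"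
    proof
      fix c assume "c \<in> C"
      then obtain F where F: "F \<in> carrier_mat l m" and cF: "c = cw F" using C_eq by blast
      define I where "I = {..<l} \<times> {..<m}"
      define Eu :: "nat \<times> nat \<Rightarrow> 'a mat" where
        "Eu p = mat l m (\<lambda>(i,j). (if i = fst p then 1 else 0) * (if j = snd p then 1 else 0))" for p
      have Euc: "Eu p \<in> carrier_mat l m" for p unfolding Eu_def by auto
      have Eu_ent: "Eu p $$ q = (if q = p then 1 else 0)" if "q \<in> I" for p q
        using that unfolding Eu_def I_def by (cases p; cases q) auto
      have Eu_rk: "mrank (Eu p) = 1" if "p \<in> I" for p
      proof -
        have "Eu p $$ p = 1" using Eu_ent[OF that] by simp
        then have "Eu p \<noteq> 0\<^sub>m l m" using that unfolding I_def by (cases p) auto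
        then have "1 \<le> mrank (Eu p)" using rk_nz[OF Euc] by simp
        moreover have "mrank (Eu p) \<le> 1" unfolding Eu_def by (rule rank1_prod)
        ultimately show ?thesis by simp
      qed
      define g where "g p = cw (Eu p)" for p
      have g_inj: "inj_on g I"
      proof (rule inj_onI)
        fix p p' assume p: "p \<in> I" and p': "p' \<in> I" and e: "g p = g p'"
        have ee: "Eu p = Eu p'" using cw_inj Euc e unfolding g_def by (meson inj_onD)
        have h0: "Eu p $$ p = 1" using Eu_ent[OF p, of p] by simp
        have h1: "Eu p' $$ p = 1" using h0 ee by simp
        have h2: "Eu p' $$ p = (if p = p' then 1 else 0)" using Eu_ent[OF p] by simp
        show "p = p'" using h1 h2 by (cases "p = p'") auto
      qed
      have gS: "g ` I \<subseteq> min_wt_words R C" unfolding mww g_def using Euc Eu_rk by blast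
      define a where "a w = F $$ (the_inv_into I g w)" for w
      have inner_Eu: "inner l m (Eu p) y = y $$ p" if p: "p \<in> I" for p y
      proof -
        obtain p1 p2 where pp: "p = (p1, p2)" by (cases p)
        have p12: "p1 < l" "p2 < m" using p pp I_def by auto
        have "inner l m (Eu p) y = (\<Sum>i<l. \<Sum>j<m. (if (i,j) = (p1,p2) then y $$ (p1,p2) else 0))"
          unfolding inner_def by (intro sum.cong refl) (auto simp: Eu_def pp)
        also have "\<dots> = (\<Sum>q\<in>{..<l} \<times> {..<m}. (if q = (p1,p2) then y $$ (p1,p2) else 0))"
          unfolding sum.cartesian_product by (rule sum.cong) (auto split: if_splits)
        also have "\<dots> = (if (p1,p2) \<in> {..<l} \<times> {..<m} then y $$ (p1,p2) else 0)"
          by (rule sum.delta) simp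
        also have "\<dots> = y $$ (p1,p2)" using p12 by simp
        finally show ?thesis using pp by simp
      qed
      have "c = (\<lambda>y. \<Sum>w\<in>g ` I. a w * w y)"
      proof (rule ext)
        fix y
        have "(\<Sum>w\<in>g ` I. a w * w y) = (\<Sum>p\<in>I. a (g p) * g p y)"
          by (simp add: sum.reindex[OF g_inj])
        also have "\<dots> = (\<Sum>p\<in>I. F $$ p * g p y)"
          by (rule sum.cong) (auto simp: a_def the_inv_into_f_f[OF g_inj])
        also have "\<dots> = cw F y"
        proof (cases "y \<in> R")
          case True
          have "(\<Sum>p\<in>I. F $$ p * g p y) = (\<Sum>p\<in>I. F $$ p * y $$ p)"
            by (rule sum.cong) (auto simp: g_def cwi True inner_Eu)
          also have "\<dots> = inner l m F y"
            unfolding inner_def I_def sum.cartesian_product by (rule sum.cong) auto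
          finally show ?thesis using cwi True by simp
        next
          case False
          then show ?thesis by (simp add: g_def cwi)
        qed
        finally show "c y = (\<Sum>w\<in>g ` I. a w * w y)" using cF by simp
      qed
      moreover have "finite (g ` I)" unfolding I_def by simp
      ultimately show "c \<in> lin_span (min_wt_words R C)" unfolding lin_span_def using gS by blast
    qed
  qed
  have part4: "\<forall>c \<in> C. \<exists>cs. set cs \<subseteq> min_wt_words R C \<and> length cs \<le> l \<and> c = (\<lambda>N. \<Sum>w\<leftarrow>cs. w N)"
  proof
    fix c assume "c \<in> C"
    then obtain F where F: "F \<in> carrier_mat l m" and cF: "c = cw F" using C_eq by blast
    define k where "k = mrank F"
    obtain U V where U: "U \<in> carrier_mat l k" and V: "V \<in> carrier_mat k m" and e: "F = U * V"
      using mrank_factor[OF F] unfolding k_def by blast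
    define Fa :: "nat \<Rightarrow> 'a mat" where "Fa a = mat l m (\<lambda>(i,j). U $$ (i,a) * V $$ (a,j))" for a
    define cs where "cs = filter (\<lambda>w. w \<noteq> (\<lambda>_. 0)) (map (\<lambda>a. cw (Fa a)) [0..<k])"
    have "set cs \<subseteq> min_wt_words R C"
    proof
      fix w assume "w \<in> set cs"
      then obtain a where w: "w = cw (Fa a)" "w \<noteq> (\<lambda>_. 0)" unfolding cs_def by auto
      have Fac: "Fa a \<in> carrier_mat l m" unfolding Fa_def by auto
      have "Fa a \<noteq> 0\<^sub>m l m" using w cw_zero by auto
      then have "1 \<le> mrank (Fa a)" using rk_nz Fac by blast
      moreover have "mrank (Fa a) \<le> 1" unfolding Fa_def by (rule rank1_prod)
      ultimately have "mrank (Fa a) = 1" by simp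
      then show "w \<in> min_wt_words R C" unfolding mww using Fac w by blast
    qed
    moreover have "length cs \<le> l"
    proof -
      have "length cs \<le> length (map (\<lambda>a. cw (Fa a)) [0..<k])" unfolding cs_def by (rule length_filter_le)
      also have "\<dots> = k" by simp
      also have "\<dots> \<le> l" unfolding k_def by (rule mrank_le_row[OF F])
      finally show ?thesis .
    qed
    moreover have "c = (\<lambda>N. \<Sum>w\<leftarrow>cs. w N)"
    proof (rule ext)
      fix N
      have "(\<Sum>w\<leftarrow>cs. w N) = (\<Sum>w\<leftarrow>map (\<lambda>a. cw (Fa a)) [0..<k]. w N)"
        unfolding cs_def by (rule sum_list_filter_nz)
      also have "\<dots> = (\<Sum>a\<leftarrow>[0..<k]. cw (Fa a) N)" by (simp add: o_def)
      also have "\<dots> = (\<Sum>a\<in>{0..<k}. cw (Fa a) N)"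
        using sum_set_upt_conv_sum_list_nat[of "\<lambda>a. cw (Fa a) N" 0 k] by simp
      also have "\<dots> = cw F N"
      proof (cases "N \<in> R")
        case True
        have Fe: "F $$ (i,j) = (\<Sum>a\<in>{0..<k}. U $$ (i,a) * V $$ (a,j))" if "i < l" "j < m" for i j
          using e U V that by (simp add: scalar_prod_def)
        have "(\<Sum>a\<in>{0..<k}. cw (Fa a) N) = (\<Sum>a\<in>{0..<k}. \<Sum>i<l. \<Sum>j<m. U $$ (i,a) * V $$ (a,j) * N $$ (i,j))"
          using True by (simp add: cwi inner_def Fa_def)
        also have "\<dots> = (\<Sum>i<l. \<Sum>a\<in>{0..<k}. \<Sum>j<m. U $$ (i,a) * V $$ (a,j) * N $$ (i,j))"
          by (rule sum.swap)
        also have "\<dots> = (\<Sum>i<l. \<Sum>j<m. \<Sum>a\<in>{0..<k}. U $$ (i,a) * V $$ (a,j) * N $$ (i,j))"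
          by (rule sum.cong[OF refl], rule sum.swap)
        also have "\<dots> = (\<Sum>i<l. \<Sum>j<m. F $$ (i,j) * N $$ (i,j))"
          by (intro sum.cong refl) (simp add: Fe sum_distrib_right)
        also have "\<dots> = cw F N" using True by (simp add: cwi inner_def)
        finally show ?thesis .
      next
        case False
        then show ?thesis by (simp add: cwi)
      qed
      finally show "c N = (\<Sum>w\<leftarrow>cs. w N)" using cF by simp
    qed
    ultimately show "\<exists>cs. set cs \<subseteq> min_wt_words R C \<and> length cs \<le> l \<and> c = (\<lambda>N. \<Sum>w\<leftarrow>cs. w N)"
      by blast
  qed
  show ?thesis using part1 part2 part3 part4 unfolding C_def by blast
qed

end
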